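(* Let $\alpha\in(0,1)$ be irrational with $\alpha=[0;a_1,a_2,\dots]$, and set $a_0=0$. For every $n\ge1$ define a finite block $B_n$ of integers as follows. (1) If $a_n\ge3$: $B_n=(q_{n-2}+q_{n-1},\;2q_{n-1},\;q_n-q_{n-1})$. (2) If $a_n=2$: $B_n=(q_n-q_{n-1})$. (3) If $a_{n-1}\ne1$, $a_n=1$, $a_{n+1}\ge2$: $B_n=(2q_{n-2}+q_{n-1})$ (note $2q_{n-2}+q_{n-1}=q_{n-2}+q_n$). (4) If $r\ge2$ and $a_{n-1}\ne1$, $a_n=a_{n+1}=\dots=a_{n+r-1}=1$, $a_{n+r}\ge2$: the $r$ indices $n,\dots,n+r-1$ of this maximal run of ones together are given the block $(2q_{n-2}+q_{n-1},\;2q_{n-1},\;2q_n,\;\dots,\;2q_{n+r-2},\;2q_{n+r-3}+q_{n+r-2})$. (5) If $a_{n-1}\ne1$ and $a_j=1$ for all $j\ge n$: the indices $j\ge n$ together are given the infinite block $(2q_{n-2}+q_{n-1},\;2q_{n-1},\;2q_n,\;2q_{n+1},\;\dots)$. Then the sequence $\mathfrak Q$ is obtained from the sequence $(a_1,a_2,a_3,\dots)$ by replacing each partial quotient (respectively each maximal run of ones) by the corresponding block and concatenating the blocks in order of increasing index; more precisely, this concatenation, after deleting repeated values, is exactly the increasing enumeration $\mathfrak q_1=1<\mathfrak q_2<\mathfrak q_3<\cdots$ of $\mathfrak Q$.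
   Context: Let $\alpha$ be an irrational real number in $(0,1)$ with continued fraction expansion $\alpha=[0;a_1,a_2,\dots]$ (the $a_i$ positive integers). Convergents: $p_n/q_n=[0;a_1,\dots,a_n]$ for $n\ge1$, with $p_{-1}=1,q_{-1}=0,p_0=0,q_0=1$, so that $q_n=a_nq_{n-1}+q_{n-2}$ and $p_n=a_np_{n-1}+p_{n-2}$. For real $t\ge1$ define $\psi^{[2]}_\alpha(t)=\min\{|q\alpha-p| : p,q\in\mathbb Z,\ 1\le q\le t,\ (p,q)\ne(p_n,q_n)\text{ for all }n\ge0\}$. Let $\mathfrak Q$ be the set consisting of $1$ together with all integers $t\ge2$ such that $\psi^{[2]}_\alpha(t)<\psi^{[2]}_\alpha(t-1)$ (the points of discontinuity of $\psi^{[2]}_\alpha$), enumerated increasingly as $\mathfrak q_1=1<\mathfrak q_2<\cdots$. *)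

theory Defs
  imports Complex_Main "HOL-Library.Infinite_Set"
begin

fun cf_rem :: "real \<Rightarrow> nat \<Rightarrow> real" where
  "cf_rem x 0 = x"
| "cf_rem x (Suc k) = frac (1 / cf_rem x k)"

definition cf_a :: "real \<Rightarrow> nat \<Rightarrow> nat" where
  "cf_a x n = (if n = 0 then 0 else nat \<lfloor>1 / cf_rem x (n - 1)\<rfloor>)"

text \<open>Shifted recurrences: qs a m = q_(m-1), ps a m = p_(m-1).\<close>
fun qs :: "(nat \<Rightarrow> nat) \<Rightarrow> nat \<Rightarrow> int" where
  "qs a 0 = 0"
| "qs a (Suc 0) = 1"
| "qs a (Suc (Suc m)) = int (a (Suc m)) * qs a (Suc m) + qs a m"

fun ps :: "(nat \<Rightarrow> nat) \<Rightarrow> nat \<Rightarrow> int" where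
  "ps a 0 = 1"
| "ps a (Suc 0) = 0"
| "ps a (Suc (Suc m)) = int (a (Suc m)) * ps a (Suc m) + ps a m"

text \<open>q_k and p_k for integer indices k \<ge> -1.\<close>
definition cf_q :: "real \<Rightarrow> int \<Rightarrow> int" where
  "cf_q x k = qs (cf_a x) (nat (k + 1))"

definition cf_p :: "real \<Rightarrow> int \<Rightarrow> int" where
  "cf_p x k = ps (cf_a x) (nat (k + 1))"

definition psi2 :: "real \<Rightarrow> real \<Rightarrow> real" where
  "psi2 x t = Inf {\<bar>real_of_int q * x - real_of_int p\<bar> | p q.
      1 \<le> q \<and> real_of_int q \<le> t \<and> (\<forall>n::nat. (p, q) \<noteq> (cf_p x (int n), cf_q x (int n)))}"

definition frakQ :: "real \<Rightarrow> nat set" where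
  "frakQ x = {1} \<union> {t. 2 \<le> t \<and> psi2 x (real t) < psi2 x (real t - 1)}"

text \<open>blk x n is the finite block attached to index n \<ge> 1 when n starts a block
  (cases (1)-(4)); it is empty at indices inside a run of ones and at the start of an
  infinite run of ones (case (5), handled separately).\<close>
definition blk :: "real \<Rightarrow> nat \<Rightarrow> int list" where
  "blk x n = (let a = cf_a x; q = cf_q x; m = int n in
     if n = 0 then []
     else if a n \<ge> 3 then [q (m - 2) + q (m - 1), 2 * q (m - 1), q m - q (m - 1)]
     else if a n = 2 then [q m - q (m - 1)]
     else if a n = 1 \<and> a (n - 1) \<noteq> 1 \<and> (\<exists>j>n. a j \<noteq> 1) then
       (let r = (LEAST r. a (n + r) \<noteq> 1) in
        if r = 1 then [2 * q (m - 2) + q (m - 1)]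
        else [2 * q (m - 2) + q (m - 1)] @ map (\<lambda>k. 2 * q (m - 1 + int k)) [0..<r]
             @ [2 * q (m + int r - 3) + q (m + int r - 2)])
     else [])"

definition blk_prefix :: "real \<Rightarrow> nat \<Rightarrow> int list" where
  "blk_prefix x N = concat (map (blk x) [1..<Suc N])"

definition inf_blk :: "real \<Rightarrow> nat \<Rightarrow> nat \<Rightarrow> int" where
  "inf_blk x n k = (if k = 0 then 2 * cf_q x (int n - 2) + cf_q x (int n - 1)
                    else 2 * cf_q x (int n + int k - 2))"

text \<open>The full concatenated sequence (indexed from 0).\<close>
definition blockseq :: "real \<Rightarrow> nat \<Rightarrow> int" where
  "blockseq x i = (let a = cf_a x in
     if \<exists>n\<ge>1. a (n - 1) \<noteq> 1 \<and> (\<forall>j\<ge>n. a j = 1) then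
       (let n = (THE n. n \<ge> 1 \<and> a (n - 1) \<noteq> 1 \<and> (\<forall>j\<ge>n. a j = 1));
            L = blk_prefix x (n - 1) in
        if i < length L then L ! i else inf_blk x n (i - length L))
     else blk_prefix x (LEAST N. i < length (blk_prefix x N)) ! i)"

definition first_occ :: "(nat \<Rightarrow> int) \<Rightarrow> nat set" where
  "first_occ S = {i. \<forall>k<i. S k \<noteq> S i}"

end

theory Submission
  imports Defs
begin

lemma imul_mono: "(a::int) \<le> b \<Longrightarrow> 0 \<le> c \<Longrightarrow> a*c \<le> b*c"
  by (simp add: mult_right_mono)
lemma rmul_mono: "(a::int) \<le> b \<Longrightarrow> 0 \<le> (c::real) \<Longrightarrow> of_int a*c \<le> of_int b*c"
  by (simp add: mult_right_mono)

locale lbctx =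
  fixes A B q0 q1 q2 :: int and d1 d2 d3 :: real
  assumes A1: "A \<ge> 1" and B1: "B \<ge> 1" and q1pos: "q1 \<ge> 1" and q0nn: "0 \<le> q0"
    and q01: "q0 \<le> q1" and q2def: "q2 = A*q1 + q0"
    and d2pos: "d2 > 0" and d3pos: "d3 > 0" and d32: "d3 < d2" and d1def: "d1 = B*d2 + d3"
begin

lemma d12: "d2 < d1"
proof -
  have "of_int B * d2 \<ge> 1 * d2" using B1 d2pos by (intro mult_right_mono) auto
  then show ?thesis using d1def d3pos by simp
qed

lemma q12: "q1 \<le> q2"
proof -
  have "A*q1 \<ge> 1*q1" using A1 q1pos by (intro imul_mono) auto
  then show ?thesis using q2def q0nn by simp
qed

lemma cls:
  fixes x y :: int
  assumes q: "1 \<le> x*q1 + y*q2"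
  shows "(y = 0 \<and> x \<ge> 1) \<or> (y \<le> -1 \<and> x \<ge> A+1) \<or> (y \<ge> 1 \<and> x \<le> -1)
        \<or> (y \<ge> 1 \<and> x = 0) \<or> (y \<ge> 1 \<and> x \<ge> 1)"
proof -
  consider "y = 0" | "y \<le> -1" | "y \<ge> 1" by linarith
  then show ?thesis
  proof cases
    case 1
    then have "x*q1 \<ge> 1" using q by simp
    then have "x \<ge> 1" using q1pos
      by (smt (verit, best) mult_nonpos_nonneg)
    then show ?thesis using 1 by simp
  next
    case 2
    have "y*q2 \<le> (-1)*q2" using 2 q12 q1pos by (intro imul_mono) auto
    then have "x*q1 > A*q1" using q q2def q0nn by linarith
    then have "x > A" using q1pos by (simp add: mult_less_cancel_right)
    then show ?thesis using 2 by simp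
  next
    case 3
    then show ?thesis by linarith
  qed
qed

definition "err x y = \<bar>of_int x * d1 - of_int y * d2\<bar>"

lemma err_y0: "x \<ge> 1 \<Longrightarrow> err x 0 = of_int x * d1"
  unfolding err_def using d2pos d12 by simp

lemma err_yneg: "y \<le> -1 \<Longrightarrow> x \<ge> A+1 \<Longrightarrow> err x y \<ge> 2*d1 + d2"
proof -
  assume y: "y \<le> -1" and x: "x \<ge> A+1"
  have "of_int x * d1 \<ge> of_int 2 * d1" using x A1 d12 d2pos by (intro rmul_mono) auto
  moreover have "of_int (-y) * d2 \<ge> of_int 1 * d2" using y d2pos by (intro rmul_mono) auto
  moreover have "of_int x*d1 - of_int y*d2 = of_int x * d1 + of_int (-y)*d2" by simp
  ultimately show ?thesis unfolding err_def using d12 d2pos by linarith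
qed

lemma err_opp: "y \<ge> 1 \<Longrightarrow> x \<le> -1 \<Longrightarrow> err x y = of_int (-x) * d1 + of_int y * d2"
proof -
  assume y: "y \<ge> 1" and x: "x \<le> -1"
  have "of_int x * d1 \<le> 0" using x d12 d2pos by (intro mult_nonpos_nonneg) auto
  moreover have "of_int y * d2 \<ge> 0" using y d2pos by simp
  ultimately show ?thesis unfolding err_def by simp
qed

lemma err_x0: "y \<ge> 1 \<Longrightarrow> err 0 y = of_int y * d2"
  unfolding err_def using d2pos by simp

lemma opp_ge: "y \<ge> 1 \<Longrightarrow> x \<le> -1 \<Longrightarrow> err x y \<ge> d1 + d2"
proof -
  assume y: "y \<ge> 1" and x: "x \<le> -1"
  have "of_int (-x) * d1 \<ge> of_int 1 * d1" using x d12 d2pos by (intro rmul_mono) auto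
  moreover have "of_int y * d2 \<ge> of_int 1 * d2" using y d2pos by (intro rmul_mono) auto
  ultimately show ?thesis using err_opp[OF y x] by simp
qed

lemma opp_ge2: "y \<ge> 1 \<Longrightarrow> x \<le> -2 \<Longrightarrow> err x y \<ge> 2*d1 + d2"
proof -
  assume y: "y \<ge> 1" and x: "x \<le> -2"
  have "of_int (-x) * d1 \<ge> of_int 2 * d1" using x d12 d2pos by (intro rmul_mono) auto
  moreover have "of_int y * d2 \<ge> of_int 1 * d2" using y d2pos by (intro rmul_mono) auto
  ultimately show ?thesis using err_opp[OF y] x by simp
qed

lemma opp_ge3: "y \<ge> 2 \<Longrightarrow> x \<le> -1 \<Longrightarrow> err x y \<ge> d1 + 2*d2"
proof -
  assume y: "y \<ge> 2" and x: "x \<le> -1"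
  have "of_int (-x) * d1 \<ge> of_int 1 * d1" using x d12 d2pos by (intro rmul_mono) auto
  moreover have "of_int y * d2 \<ge> of_int 2 * d2" using y d2pos by (intro rmul_mono) auto
  ultimately show ?thesis using err_opp[of y x] x y by simp
qed

lemma y0_ge2: "x \<ge> 2 \<Longrightarrow> err x 0 \<ge> 2*d1"
proof -
  assume x: "x \<ge> 2"
  have "of_int x * d1 \<ge> of_int 2 * d1" using x d12 d2pos by (intro rmul_mono) auto
  then show ?thesis using err_y0[of x] x by simp
qed

lemma err_yneg': "y \<le> -1 \<Longrightarrow> x \<ge> 1 \<Longrightarrow> err x y \<ge> of_int x * d1 + d2"
proof -
  assume y: "y \<le> -1" and x: "x \<ge> 1"
  have "of_int x * d1 \<ge> 0" using x d12 d2pos by simp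
  moreover have "of_int (-y) * d2 \<ge> of_int 1 * d2" using y d2pos by (intro rmul_mono) auto
  moreover have "of_int x*d1 - of_int y*d2 = of_int x * d1 + of_int (-y)*d2" by simp
  ultimately show ?thesis unfolding err_def using d12 d2pos by linarith
qed

lemma d1_2d2: "B \<ge> 2 \<Longrightarrow> d1 \<ge> 2*d2"
proof -
  assume "B \<ge> 2"
  then have "of_int B * d2 \<ge> of_int 2 * d2" using d2pos by (intro rmul_mono) auto
  then show ?thesis using d1def d3pos by simp
qed

lemma both_q: "x \<ge> 1 \<Longrightarrow> y \<ge> 1 \<Longrightarrow> x*q1 + y*q2 \<ge> q1 + q2"
proof -
  assume "x \<ge> 1" "y \<ge> 1"
  then have "x*q1 \<ge> 1*q1" "y*q2 \<ge> 1*q2" using q1pos q12 by (intro imul_mono; simp)+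
  then show ?thesis by simp
qed

lemma ge2_q: "(y::int) \<ge> 2 \<Longrightarrow> 0 \<le> c \<Longrightarrow> y*c \<ge> 2*c"
  by (intro imul_mono) auto

lemma LB_A:
  assumes q: "1 \<le> x*q1 + y*q2" and T: "x*q1 + y*q2 < q2 - q1" and nc: "(x,y) \<noteq> (1,0)"
  shows "err x y \<ge> 2*d1"
  using cls[OF q]
proof (elim disjE conjE)
  assume "y = 0" "1 \<le> x" then show ?thesis using nc y0_ge2[of x] by (cases "x = 1") auto
next
  assume y: "y \<le> -1" and x: "A + 1 \<le> x" then show ?thesis using err_yneg[OF y x] d2pos by linarith
next
  assume y: "1 \<le> y" and x: "x \<le> -1"
  have "y*q2 \<ge> 1*q2" using y q12 q1pos by (intro imul_mono) auto
  then have "x \<noteq> -1" using T by auto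
  then have x2: "x \<le> -2" using x by simp
  show ?thesis using opp_ge2[OF y x2] d2pos by linarith
next
  assume y: "1 \<le> y" and "x = 0"
  have "y*q2 \<ge> 1*q2" using y q12 q1pos by (intro imul_mono) auto
  then show ?thesis using T \<open>x = 0\<close> q1pos by simp
next
  assume y: "1 \<le> y" and x: "1 \<le> x" then show ?thesis using both_q[OF x y] T q1pos by linarith
qed

lemma LB_B:
  assumes A2: "A \<ge> 2" and q: "1 \<le> x*q1 + y*q2" and T: "x*q1 + y*q2 < 2*q1" and nc: "(x,y) \<noteq> (1,0)"
  shows "err x y \<ge> of_int (A-1)*d1 + d2"
  using cls[OF q]
proof (elim disjE conjE)
  assume "y = 0" "1 \<le> x"
  moreover have "x \<ge> 2 \<Longrightarrow> x*q1 \<ge> 2*q1" using q1pos by (intro imul_mono) auto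
  ultimately show ?thesis using nc T by (cases "x = 1") auto
next
  assume y: "y \<le> -1" and x: "A + 1 \<le> x"
  have "of_int x * d1 \<ge> of_int (A-1) * d1" using x d12 d2pos by (intro rmul_mono) auto
  moreover have "x \<ge> 1" using x A1 by simp
  ultimately show ?thesis using err_yneg'[OF y] by (meson add_mono order_refl order_trans)
next
  assume y: "1 \<le> y" and x: "x \<le> -1"
  have "y*q2 \<ge> 1*q2" using y q12 q1pos by (intro imul_mono) auto
  moreover have "A*q1 \<ge> 2*q1" using A2 q1pos by (intro imul_mono) auto
  ultimately have "(-x)*q1 > (A-2)*q1" using T q2def q0nn by (simp add: algebra_simps)
  then have "-x > A - 2" using q1pos mult_right_less_imp_less[of "A-2" q1 "-x"] by simp
  then have jx: "-x \<ge> A - 1" by simp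
  have "of_int (-x) * d1 \<ge> of_int (A-1) * d1" using jx d12 d2pos by (intro rmul_mono) auto
  moreover have "of_int y * d2 \<ge> of_int 1 * d2" using y d2pos by (intro rmul_mono) auto
  ultimately show ?thesis using err_opp[OF y x] by simp
next
  assume y: "1 \<le> y" and "x = 0"
  have "y*q2 \<ge> 1*q2" using y q12 q1pos by (intro imul_mono) auto
  moreover have "A*q1 \<ge> 2*q1" using A2 q1pos by (intro imul_mono) auto
  ultimately show ?thesis using T \<open>x = 0\<close> q2def q0nn by simp
next
  assume y: "1 \<le> y" and x: "1 \<le> x"
  have "A*q1 \<ge> 2*q1" using A2 q1pos by (intro imul_mono) auto
  then have False using both_q[OF x y] T q2def q0nn q1pos by linarith
  then show ?thesis ..
qed

lemma LB_C:
  assumes q: "1 \<le> x*q1 + y*q2" and T: "x*q1 + y*q2 < q1 + q2" and nc: "(x,y) \<noteq> (1,0)" "(x,y) \<noteq> (0,1)"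
  shows "err x y \<ge> d1 + d2"
  using cls[OF q]
proof (elim disjE conjE)
  assume "y = 0" "1 \<le> x" then show ?thesis using nc y0_ge2[of x] d12 by (cases "x = 1") auto
next
  assume y: "y \<le> -1" and x: "A + 1 \<le> x" then show ?thesis using err_yneg[OF y x] d12 d2pos by linarith
next
  assume y: "1 \<le> y" and x: "x \<le> -1" then show ?thesis using opp_ge by blast
next
  assume y: "1 \<le> y" and "x = 0"
  have "y \<ge> 2 \<Longrightarrow> y*q2 \<ge> 2*q2" using q12 q1pos by (intro imul_mono) auto
  then show ?thesis using T \<open>x = 0\<close> q12 nc y by (cases "y = 1") auto
next
  assume y: "1 \<le> y" and x: "1 \<le> x" then show ?thesis using both_q[OF x y] T by linarith
qed

lemma LB_D:
  assumes A2: "A \<ge> 2" and Bv: "B = 1" and q: "1 \<le> x*q1 + y*q2" and T: "x*q1 + y*q2 < q2 + 2*q1"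
    and nc: "(x,y) \<noteq> (1,0)" "(x,y) \<noteq> (0,1)" "(x,y) \<noteq> (1,B)"
  shows "err x y \<ge> d1 + d2"
  using cls[OF q]
proof (elim disjE conjE)
  assume "y = 0" "1 \<le> x" then show ?thesis using nc y0_ge2[of x] d12 by (cases "x = 1") auto
next
  assume y: "y \<le> -1" and x: "A + 1 \<le> x" then show ?thesis using err_yneg[OF y x] d12 d2pos by linarith
next
  assume y: "1 \<le> y" and x: "x \<le> -1" then show ?thesis using opp_ge by blast
next
  assume y: "1 \<le> y" and "x = 0"
  have "y \<ge> 2 \<Longrightarrow> y*q2 \<ge> 2*q2" using q12 q1pos by (intro imul_mono) auto
  moreover have "A*q1 \<ge> 2*q1" using A2 q1pos by (intro imul_mono) auto
  ultimately show ?thesis using T \<open>x = 0\<close> q2def q0nn nc y by (cases "y = 1") auto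
next
  assume y: "1 \<le> y" and x: "1 \<le> x"
  have "y \<ge> 2 \<Longrightarrow> y*q2 \<ge> 2*q2" using q12 q1pos by (intro imul_mono) auto
  moreover have "x \<ge> 2 \<Longrightarrow> x*q1 \<ge> 2*q1" using q1pos by (intro imul_mono) auto
  moreover have "x*q1 \<ge> 1*q1" "y*q2 \<ge> 1*q2" using x y q1pos q12 by (intro imul_mono; simp)+
  ultimately show ?thesis
  proof -
    assume h1: "y \<ge> 2 \<Longrightarrow> y*q2 \<ge> 2*q2" and h2: "x \<ge> 2 \<Longrightarrow> x*q1 \<ge> 2*q1"
      and h3: "x*q1 \<ge> 1*q1" and h4: "y*q2 \<ge> 1*q2"
    have False
    proof (cases "y = 1")
      case True
      then have "x \<noteq> 1" using nc Bv by auto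
      then have "x \<ge> 2" using x by simp
      then show False using h2 T True by simp
    next
      case False
      then have "y \<ge> 2" using y by simp
      then show False using h1 h3 T q12 by simp
    qed
    then show ?thesis ..
  qed
qed

lemma LB_E:
  assumes Av: "A = 1" and B2: "B \<ge> 2" and q: "1 \<le> x*q1 + y*q2" and T: "x*q1 + y*q2 < q1 + q2"
    and nc: "(x,y) \<noteq> (1,0)" "(x,y) \<noteq> (0,1)" "(x,y) \<noteq> (-A,1)"
  shows "err x y \<ge> d1 + 2*d2"
  using cls[OF q]
proof (elim disjE conjE)
  assume "y = 0" "1 \<le> x" then show ?thesis using nc y0_ge2[of x] d1_2d2[OF B2] by (cases "x = 1") auto
next
  assume y: "y \<le> -1" and x: "A + 1 \<le> x" then show ?thesis using err_yneg[OF y x] d12 d2pos by linarith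
next
  assume y: "1 \<le> y" and x: "x \<le> -1"
  show ?thesis
  proof (cases "y = 1")
    case True
    then have x2: "x \<le> -2" using nc x Av by auto
    show ?thesis using opp_ge2[OF y x2] d12 d2pos by linarith
  next
    case False
    then show ?thesis using opp_ge3[of y x] x y by simp
  qed
next
  assume y: "1 \<le> y" and "x = 0"
  have "y \<ge> 2 \<Longrightarrow> y*q2 \<ge> 2*q2" using q12 q1pos by (intro imul_mono) auto
  then show ?thesis using T \<open>x = 0\<close> q12 nc y by (cases "y = 1") auto
next
  assume y: "1 \<le> y" and x: "1 \<le> x" then show ?thesis using both_q[OF x y] T by linarith
qed

lemma LB_F:
  assumes Av: "A = 1" and q: "1 \<le> x*q1 + y*q2" and T: "x*q1 + y*q2 < 2*q1"
    and nc: "(x,y) \<noteq> (1,0)" "(x,y) \<noteq> (0,1)" "(x,y) \<noteq> (-A,1)"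
  shows "err x y \<ge> d1 + 2*d2"
  using cls[OF q]
proof (elim disjE conjE)
  assume "y = 0" "1 \<le> x"
  moreover have "x \<ge> 2 \<Longrightarrow> x*q1 \<ge> 2*q1" using q1pos by (intro imul_mono) auto
  ultimately show ?thesis using nc T by (cases "x = 1") auto
next
  assume y: "y \<le> -1" and x: "A + 1 \<le> x" then show ?thesis using err_yneg[OF y x] d12 d2pos by linarith
next
  assume y: "1 \<le> y" and x: "x \<le> -1"
  show ?thesis
  proof (cases "y = 1")
    case True
    then have x2: "x \<le> -2" using nc x Av by auto
    show ?thesis using opp_ge2[OF y x2] d12 d2pos by linarith
  next
    case False
    then show ?thesis using opp_ge3[of y x] x y by simp
  qed
next
  assume y: "1 \<le> y" and "x = 0"
  have "y \<ge> 2 \<Longrightarrow> y*q2 \<ge> 2*q2" using q12 q1pos by (intro imul_mono) auto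
  then show ?thesis using T \<open>x = 0\<close> q12 nc y by (cases "y = 1") auto
next
  assume "1 \<le> y" "1 \<le> x" then show ?thesis using both_q[of x y] T q12 by simp
qed

lemma LB_G:
  assumes Av: "A = 1" and Bv: "B = 1" and q: "1 \<le> x*q1 + y*q2" and T: "x*q1 + y*q2 < 2*q2"
    and nc: "(x,y) \<noteq> (1,0)" "(x,y) \<noteq> (0,1)" "(x,y) \<noteq> (-A,1)" "(x,y) \<noteq> (1,B)"
  shows "err x y \<ge> 2*d1"
  using cls[OF q]
proof (elim disjE conjE)
  assume "y = 0" "1 \<le> x" then show ?thesis using nc y0_ge2[of x] by (cases "x = 1") auto
next
  assume y: "y \<le> -1" and x: "A + 1 \<le> x" then show ?thesis using err_yneg[OF y x] d2pos by linarith
next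
  assume y: "1 \<le> y" and x: "x \<le> -1"
  have d: "d1 < 2*d2" using d1def Bv d32 by simp
  show ?thesis
  proof (cases "y = 1")
    case True
    then have x2: "x \<le> -2" using nc x Av by auto
    show ?thesis using opp_ge2[OF y x2] d2pos by linarith
  next
    case False
    then show ?thesis using opp_ge3[of y x] x y d by simp
  qed
next
  assume y: "1 \<le> y" and "x = 0"
  have "y \<ge> 2 \<Longrightarrow> y*q2 \<ge> 2*q2" using q12 q1pos by (intro imul_mono) auto
  then show ?thesis using T \<open>x = 0\<close> q12 nc y by (cases "y = 1") auto
next
  assume y: "1 \<le> y" and x: "1 \<le> x"
  have "y \<ge> 2 \<Longrightarrow> y*q2 \<ge> 2*q2" using q12 q1pos by (intro imul_mono) auto
  moreover have "x \<ge> 2 \<Longrightarrow> x*q1 \<ge> 2*q1" using q1pos by (intro imul_mono) auto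
  moreover have "x*q1 \<ge> 1*q1" "y*q2 \<ge> 1*q2" using x y q1pos q12 by (intro imul_mono; simp)+
  ultimately show ?thesis
  proof -
    assume h1: "y \<ge> 2 \<Longrightarrow> y*q2 \<ge> 2*q2" and h2: "x \<ge> 2 \<Longrightarrow> x*q1 \<ge> 2*q1"
      and h3: "x*q1 \<ge> 1*q1" and h4: "y*q2 \<ge> 1*q2"
    have False
    proof (cases "y = 1")
      case True
      then have "x \<noteq> 1" using nc Bv by auto
      then have "x \<ge> 2" using x by simp
      then show False using h2 T True q2def Av q01 by simp
    next
      case False
      then have "y \<ge> 2" using y by simp
      then have "y*q2 \<ge> 2*q2" using h1 by blast
      then show False using h3 T q12 q1pos by linarith
    qed
    then show ?thesis ..
  qed
qed

lemma LB_H: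
  assumes Av: "A = 1" and q: "1 \<le> x*q1 + y*q2" and T: "x*q1 + y*q2 < q2 + q0"
    and nc: "(x,y) \<noteq> (1,0)" "(x,y) \<noteq> (0,1)" "(x,y) \<noteq> (-A,1)"
  shows "err x y \<ge> 2*d1"
  using cls[OF q]
proof (elim disjE conjE)
  assume "y = 0" "1 \<le> x" then show ?thesis using nc y0_ge2[of x] by (cases "x = 1") auto
next
  assume y: "y \<le> -1" and x: "A + 1 \<le> x" then show ?thesis using err_yneg[OF y x] d2pos by linarith
next
  assume y: "1 \<le> y" and x: "x \<le> -1"
  have "y \<ge> 2 \<Longrightarrow> y*q2 \<ge> 2*q2" using q12 q1pos by (intro imul_mono) auto
  then have "x \<noteq> -1" using nc T y Av q2def by (cases "y = 1") auto
  then have x2: "x \<le> -2" using x by simp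
  show ?thesis using opp_ge2[OF y x2] d2pos by linarith
next
  assume y: "1 \<le> y" and "x = 0"
  have "y \<ge> 2 \<Longrightarrow> y*q2 \<ge> 2*q2" using q12 q1pos by (intro imul_mono) auto
  then show ?thesis using T \<open>x = 0\<close> q12 q01 nc y by (cases "y = 1") auto
next
  assume "1 \<le> y" "1 \<le> x" then show ?thesis using both_q[of x y] T q01 by simp
qed

end

locale cfa =
  fixes \<alpha> :: real
  assumes apos: "0 < \<alpha>" and alt1: "\<alpha> < 1" and airr: "\<alpha> \<notin> \<rat>"
begin

abbreviation "a \<equiv> cf_a \<alpha>"
abbreviation "Q \<equiv> qs (cf_a \<alpha>)"
abbreviation "Pp \<equiv> ps (cf_a \<alpha>)"
abbreviation "xr \<equiv> cf_rem \<alpha>"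

lemma rem_props: "0 < xr k \<and> xr k < 1 \<and> xr k \<notin> \<rat>"
proof (induction k)
  case 0
  then show ?case using apos alt1 airr by simp
next
  case (Suc k)
  let ?y = "1 / xr k"
  have y1: "?y > 1" using Suc by simp
  have yq: "?y \<notin> \<rat>"
  proof
    assume "?y \<in> \<rat>"
    then have "1 / ?y \<in> \<rat>" by (rule Rats_divide[OF Rats_1])
    then show False using Suc by simp
  qed
  have fq: "frac ?y \<notin> \<rat>"
  proof
    assume h: "frac ?y \<in> \<rat>"
    have "?y = frac ?y + of_int \<lfloor>?y\<rfloor>" by (simp add: frac_def)
    also have "\<dots> \<in> \<rat>" using h by (intro Rats_add) auto
    finally show False using yq by simp
  qed
  have "frac ?y \<noteq> 0" using fq by (metis Rats_0)
  then have "frac ?y > 0" using frac_ge_0[of ?y] by linarith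
  then show ?case using fq frac_lt_1[of ?y] by simp
qed

lemma xr_pos: "0 < xr k" and xr_lt1: "xr k < 1"
  using rem_props by auto

lemma a_Suc: "a (Suc k) = nat \<lfloor>1 / xr k\<rfloor>"
  by (simp add: cf_a_def)

lemma fl_ge1: "\<lfloor>1 / xr k\<rfloor> \<ge> 1"
proof -
  have "1 / xr k \<ge> 1" using xr_pos[of k] xr_lt1[of k] by simp
  then show ?thesis by simp
qed

lemma a_pos: "n \<ge> 1 \<Longrightarrow> a n \<ge> 1"
proof -
  assume "n \<ge> 1"
  then obtain k where "n = Suc k" by (cases n) auto
  have "nat \<lfloor>1 / xr k\<rfloor> \<ge> nat 1" using nat_mono[OF fl_ge1[of k]] .
  then show ?thesis using a_Suc[of k] \<open>n = Suc k\<close> by simp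
qed

lemma a0: "a 0 = 0" by (simp add: cf_a_def)

lemma inv_rel: "1 / xr k = of_nat (a (Suc k)) + xr (Suc k)"
proof -
  have "of_nat (a (Suc k)) = real_of_int \<lfloor>1 / xr k\<rfloor>"
    unfolding a_Suc by (rule of_nat_nat) (use fl_ge1[of k] in linarith)
  then show ?thesis by (simp add: frac_def)
qed

definition eps :: "nat \<Rightarrow> real" where "eps m = of_int (Q m) * \<alpha> - of_int (Pp m)"
definition dl :: "nat \<Rightarrow> real" where "dl m = \<bar>eps m\<bar>"

lemma eps0: "eps 0 = -1" by (simp add: eps_def)
lemma eps1: "eps 1 = \<alpha>" by (simp add: eps_def)
lemma eps_rec: "eps (Suc (Suc m)) = of_nat (a (Suc m)) * eps (Suc m) + eps m"
  by (simp add: eps_def algebra_simps)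

lemma eps_step: "eps (Suc k) = - xr k * eps k"
proof (induction k rule: less_induct)
  case (less k)
  show ?case
  proof (cases k)
    case 0
    then show ?thesis by (simp add: eps_def)
  next
    case (Suc j)
    have IH: "eps (Suc j) = - xr j * eps j" using less Suc by simp
    have xj: "xr j > 0" using xr_pos by simp
    have ej: "eps j = - eps (Suc j) / xr j" using IH xj by (simp add: field_simps)
    have "eps (Suc (Suc j)) = of_nat (a (Suc j)) * eps (Suc j) + eps j" by (rule eps_rec)
    also have "\<dots> = eps (Suc j) * (of_nat (a (Suc j)) - 1 / xr j)" using ej by (simp add: algebra_simps)
    also have "\<dots> = - xr (Suc j) * eps (Suc j)"
    proof -
      have "of_nat (a (Suc j)) - 1 / xr j = - xr (Suc j)" using inv_rel[of j] by linarith
      then show ?thesis by simp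
    qed
    finally show ?thesis using Suc by simp
  qed
qed

lemma dl_step: "dl (Suc k) = xr k * dl k"
  using eps_step[of k] xr_pos[of k] by (simp add: dl_def abs_mult)

lemma dl0: "dl 0 = 1" by (simp add: dl_def eps0)

lemma dl_pos: "dl m > 0"
  by (induction m) (auto simp: dl0 dl_step xr_pos)

lemma dl_dec: "dl (Suc m) < dl m"
  using dl_step[of m] xr_lt1[of m] dl_pos[of m] by simp

lemma dl_anti: "m \<le> n \<Longrightarrow> dl n \<le> dl m"
  by (induction n rule: dec_induct) (auto intro: order.trans less_imp_le[OF dl_dec])

lemma eps_sign: "eps m = (-1)^(Suc m) * dl m"
proof (induction m)
  case 0
  then show ?case by (simp add: eps0 dl0)
next
  case (Suc m)
  have "eps (Suc m) = - xr m * eps m" by (rule eps_step)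
  also have "\<dots> = (-1)^(Suc (Suc m)) * (xr m * dl m)" using Suc by simp
  finally show ?case using dl_step by simp
qed

lemma dl_rec: "dl m = of_nat (a (Suc m)) * dl (Suc m) + dl (Suc (Suc m))"
proof -
  have "eps (Suc (Suc m)) = of_nat (a (Suc m)) * eps (Suc m) + eps m" by (rule eps_rec)
  then have "(-1)^(Suc m) * dl (Suc (Suc m)) = of_nat (a (Suc m)) * (- ((-1)^(Suc m) * dl (Suc m))) + (-1)^(Suc m) * dl m"
    by (simp add: eps_sign)
  then have "(-1)^(Suc m) * (dl (Suc (Suc m)) + of_nat (a (Suc m)) * dl (Suc m) - dl m) = (0::real)"
    by (simp add: algebra_simps)
  then show ?thesis by simp
qed

lemma det: "Pp m * Q (Suc m) - Pp (Suc m) * Q m = (-1)^m"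
proof (induction m)
  case 0
  then show ?case by simp
next
  case (Suc m)
  have "Pp (Suc m) * Q (Suc (Suc m)) - Pp (Suc (Suc m)) * Q (Suc m)
        = - (Pp m * Q (Suc m) - Pp (Suc m) * Q m)" by (simp add: algebra_simps)
  then show ?case using Suc by simp
qed

lemma coords:
  fixes p q :: int
  obtains x y where "p = x * Pp m + y * Pp (Suc m)" "q = x * Q m + y * Q (Suc m)"
    "\<bar>of_int q * \<alpha> - of_int p\<bar> = \<bar>of_int x * dl m - of_int y * dl (Suc m)\<bar>"
proof -
  let ?d = "(-1::int)^m"
  define x where "x = ?d * (p * Q (Suc m) - q * Pp (Suc m))"
  define y where "y = ?d * (q * Pp m - p * Q m)"
  have dd: "?d * ?d = 1" by (simp flip: power_add add: power_even_eq)
  have D: "Pp m * Q (Suc m) - Pp (Suc m) * Q m = ?d" by (rule det)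
  have hp: "p = x * Pp m + y * Pp (Suc m)"
  proof -
    have "x * Pp m + y * Pp (Suc m) = ?d * p * (Pp m * Q (Suc m) - Pp (Suc m) * Q m)"
      by (simp add: x_def y_def algebra_simps)
    also have "\<dots> = p" using D dd by (simp add: algebra_simps)
    finally show ?thesis by simp
  qed
  have hq: "q = x * Q m + y * Q (Suc m)"
  proof -
    have "x * Q m + y * Q (Suc m) = ?d * q * (Pp m * Q (Suc m) - Pp (Suc m) * Q m)"
      by (simp add: x_def y_def algebra_simps)
    also have "\<dots> = q" using D dd by (simp add: algebra_simps)
    finally show ?thesis by simp
  qed
  have "of_int q * \<alpha> - of_int p = of_int x * eps m + of_int y * eps (Suc m)"
    by (simp add: hp hq eps_def algebra_simps)
  also have "\<dots> = (-1)^(Suc m) * (of_int x * dl m - of_int y * dl (Suc m))"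
    by (simp add: eps_sign algebra_simps)
  finally have "\<bar>of_int q * \<alpha> - of_int p\<bar> = \<bar>of_int x * dl m - of_int y * dl (Suc m)\<bar>"
    by (simp add: abs_mult)
  then show ?thesis using that hp hq by blast
qed

lemma qs_nonneg: "qs f m \<ge> 0"
  by (induction f m rule: qs.induct) auto

lemma Q_rec: "m \<ge> 1 \<Longrightarrow> Q (Suc m) = int (a m) * Q m + Q (m - 1)"
  by (cases m) auto

lemma Q_mono1: "Q m \<le> Q (Suc m)"
proof (cases m)
  case 0
  then show ?thesis by simp
next
  case (Suc k)
  have "int (a (Suc k)) * Q (Suc k) \<ge> 1 * Q (Suc k)"
    using a_pos[of "Suc k"] qs_nonneg[of "cf_a \<alpha>" "Suc k"] by (intro mult_right_mono) auto
  then show ?thesis using Suc qs_nonneg[of "cf_a \<alpha>" k] by simp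
qed

lemma Q_mono: "m \<le> n \<Longrightarrow> Q m \<le> Q n"
  by (induction n rule: dec_induct) (auto intro: order.trans[OF _ Q_mono1])

lemma Q_pos: "m \<ge> 1 \<Longrightarrow> Q m \<ge> 1"
  using Q_mono[of 1 m] by simp

lemma Q_strict: "m \<ge> 2 \<Longrightarrow> Q m < Q (Suc m)"
proof -
  assume m: "m \<ge> 2"
  have "int (a m) * Q m \<ge> 1 * Q m"
    using a_pos[of m] m qs_nonneg[of "cf_a \<alpha>" m] by (intro mult_right_mono) auto
  moreover have "Q (m-1) \<ge> 1" using Q_pos[of "m-1"] m by simp
  ultimately show ?thesis using Q_rec[of m] m by simp
qed

lemma Q_between: "Q j < q \<Longrightarrow> q < Q (Suc j) \<Longrightarrow> q \<noteq> Q k"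
proof
  assume h: "Q j < q" "q < Q (Suc j)" "q = Q k"
  show False
  proof (cases "k \<le> j")
    case True then show False using Q_mono[of k j] h by simp
  next
    case False then show False using Q_mono[of "Suc j" k] h by simp
  qed
qed

lemma Q_ge: "Q m \<ge> int m - 1"
proof (induction m rule: less_induct)
  case (less m)
  show ?case
  proof (cases "m \<le> 2")
    case True
    then show ?thesis using Q_pos[of m] by (cases "m = 0") auto
  next
    case False
    then have "Q (m-1) < Q m" using Q_strict[of "m-1"] by simp
    moreover have "Q (m-1) \<ge> int (m-1) - 1" using less[of "m-1"] False by simp
    moreover have "int (m-1) = int m - 1" using False by simp
    ultimately show ?thesis by linarith
  qed
qed

lemma Q_eq1: "Q k = 1 \<Longrightarrow> k = 1 \<or> (k = 2 \<and> a 1 = 1)"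
proof -
  assume h: "Q k = 1"
  have "k \<noteq> 0" using h by (cases k) auto
  moreover have "k \<ge> 3 \<Longrightarrow> False"
  proof -
    assume "k \<ge> 3"
    then have "Q 2 < Q 3" "Q 3 \<le> Q k" using Q_strict[of 2] Q_mono[of 3 k] by auto
    moreover have "Q 2 \<ge> 1" using Q_pos[of 2] by simp
    ultimately show False using h by (simp add: numeral_eq_Suc)
  qed
  moreover have "k = 2 \<Longrightarrow> a 1 = 1" using h by (simp add: numeral_eq_Suc)
  ultimately show ?thesis by (cases "k = 1"; cases "k = 2") auto
qed

end

context cfa begin

lemma P_rec: "m \<ge> 1 \<Longrightarrow> Pp (Suc m) = int (a m) * Pp m + Pp (m - 1)"
  by (cases m) auto

definition nc :: "int \<Rightarrow> int \<Rightarrow> bool" where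
  "nc p q \<longleftrightarrow> (\<forall>n. (p, q) \<noteq> (Pp (Suc n), Q (Suc n)))"

definition er :: "int \<times> int \<Rightarrow> real" where
  "er w = \<bar>of_int (snd w) * \<alpha> - of_int (fst w)\<bar>"

definition valid :: "int \<times> int \<Rightarrow> bool" where
  "valid w \<longleftrightarrow> nc (fst w) (snd w) \<and> 1 \<le> snd w"

definition lbnd :: "int \<Rightarrow> real \<Rightarrow> bool" where
  "lbnd T E \<longleftrightarrow> (\<forall>p q. nc p q \<longrightarrow> 1 \<le> q \<longrightarrow> q < T \<longrightarrow> E \<le> \<bar>of_int q * \<alpha> - of_int p\<bar>)"

definition chain :: "int \<times> int \<Rightarrow> int \<times> int \<Rightarrow> bool" where
  "chain w w' \<longleftrightarrow> snd w \<le> snd w' \<and> er w' < er w \<and> lbnd (snd w') (er w)"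

lemma ctx: "m \<ge> 1 \<Longrightarrow> lbctx (int (a m)) (int (a (Suc m))) (Q (m-1)) (Q m) (Q (Suc m))
   (dl m) (dl (Suc m)) (dl (Suc (Suc m)))"
  apply unfold_locales
  using a_pos[of m] a_pos[of "Suc m"] Q_pos[of m] qs_nonneg[of "cf_a \<alpha>" "m-1"]
    Q_mono[of "m-1" m] Q_rec[of m] dl_pos[of "Suc m"] dl_pos[of "Suc (Suc m)"]
    dl_dec[of "Suc m"] dl_rec[of m]
  by auto

lemma transfer:
  assumes m: "m \<ge> 1" and nc: "nc p q" and q: "1 \<le> q"
  obtains x y where "q = x * Q m + y * Q (Suc m)"
    "\<bar>of_int q * \<alpha> - of_int p\<bar> = \<bar>of_int x * dl m - of_int y * dl (Suc m)\<bar>"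
    "(x,y) \<noteq> (1,0)" "(x,y) \<noteq> (0,1)" "(x,y) \<noteq> (- int (a m),1)" "(x,y) \<noteq> (1, int (a (Suc m)))"
proof -
  obtain x y where hp: "p = x * Pp m + y * Pp (Suc m)" and hq: "q = x * Q m + y * Q (Suc m)"
    and he: "\<bar>of_int q * \<alpha> - of_int p\<bar> = \<bar>of_int x * dl m - of_int y * dl (Suc m)\<bar>"
    by (rule coords)
  have n1: "(x,y) \<noteq> (1,0)"
  proof
    assume "(x,y) = (1,0)"
    then have "(p,q) = (Pp (Suc (m-1)), Q (Suc (m-1)))" using hp hq m by simp
    then show False using nc unfolding nc_def by blast
  qed
  have n2: "(x,y) \<noteq> (0,1)"
  proof
    assume "(x,y) = (0,1)"
    then have "(p,q) = (Pp (Suc m), Q (Suc m))" using hp hq m by simp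
    then show False using nc unfolding nc_def by blast
  qed
  have n3: "(x,y) \<noteq> (- int (a m),1)"
  proof
    assume xy: "(x,y) = (- int (a m),1)"
    then have pq: "p = Pp (m-1)" "q = Q (m-1)" using hp hq P_rec[OF m] Q_rec[OF m] by auto
    show False
    proof (cases "m = 1")
      case True then show False using pq q by simp
    next
      case False
      then have "(p,q) = (Pp (Suc (m-2)), Q (Suc (m-2)))" using pq m
        by (simp add: Suc_diff_Suc numeral_2_eq_2)
      then show False using nc unfolding nc_def by blast
    qed
  qed
  have n4: "(x,y) \<noteq> (1, int (a (Suc m)))"
  proof
    assume "(x,y) = (1, int (a (Suc m)))"
    then have "(p,q) = (Pp (Suc (Suc m)), Q (Suc (Suc m)))" using hp hq by (simp add: algebra_simps)
    then show False using nc unfolding nc_def by blast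
  qed
  show ?thesis using that hq he n1 n2 n3 n4 by blast
qed

lemma LA: assumes m: "m \<ge> 1" shows "lbnd (Q (Suc m) - Q m) (2 * dl m)"
  unfolding lbnd_def
proof (intro allI impI)
  fix p q assume nc: "nc p q" and q: "1 \<le> q" and T: "q < Q (Suc m) - Q m"
  obtain x y where h: "q = x * Q m + y * Q (Suc m)"
    "\<bar>of_int q * \<alpha> - of_int p\<bar> = \<bar>of_int x * dl m - of_int y * dl (Suc m)\<bar>"
    "(x,y) \<noteq> (1,0)" "(x,y) \<noteq> (0,1)" "(x,y) \<noteq> (- int (a m),1)" "(x,y) \<noteq> (1, int (a (Suc m)))"
    using transfer[OF m nc q] by blast
  interpret L: lbctx "int (a m)" "int (a (Suc m))" "Q (m-1)" "Q m" "Q (Suc m)" "dl m" "dl (Suc m)" "dl (Suc (Suc m))"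
    by (rule ctx[OF m])
  have q': "1 \<le> x * Q m + y * Q (Suc m)" using q h(1) by simp
  have T': "x * Q m + y * Q (Suc m) < Q (Suc m) - Q m" using T h(1) by simp
  have "L.err x y \<ge> 2 * dl m" by (rule L.LB_A[OF q' T' h(3)])
  then show "2 * dl m \<le> \<bar>of_int q * \<alpha> - of_int p\<bar>" using h(2) unfolding L.err_def by simp
qed

lemma LBB: assumes m: "m \<ge> 1" and A: "a m \<ge> 2" shows "lbnd (2 * Q m) (of_int (int (a m) - 1) * dl m + dl (Suc m))"
  unfolding lbnd_def
proof (intro allI impI)
  fix p q assume nc: "nc p q" and q: "1 \<le> q" and T: "q < 2 * Q m"
  obtain x y where h: "q = x * Q m + y * Q (Suc m)"
    "\<bar>of_int q * \<alpha> - of_int p\<bar> = \<bar>of_int x * dl m - of_int y * dl (Suc m)\<bar>"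
    "(x,y) \<noteq> (1,0)" "(x,y) \<noteq> (0,1)" "(x,y) \<noteq> (- int (a m),1)" "(x,y) \<noteq> (1, int (a (Suc m)))"
    using transfer[OF m nc q] by blast
  interpret L: lbctx "int (a m)" "int (a (Suc m))" "Q (m-1)" "Q m" "Q (Suc m)" "dl m" "dl (Suc m)" "dl (Suc (Suc m))"
    by (rule ctx[OF m])
  have q': "1 \<le> x * Q m + y * Q (Suc m)" using q h(1) by simp
  have T': "x * Q m + y * Q (Suc m) < 2 * Q m" using T h(1) by simp
  have "L.err x y \<ge> of_int (int (a m) - 1) * dl m + dl (Suc m)" by (rule L.LB_B[OF _ q' T' h(3)]) (use A in auto)
  then show "of_int (int (a m) - 1) * dl m + dl (Suc m) \<le> \<bar>of_int q * \<alpha> - of_int p\<bar>" using h(2) unfolding L.err_def by simp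
qed

lemma LC: assumes m: "m \<ge> 1"  shows "lbnd (Q m + Q (Suc m)) (dl m + dl (Suc m))"
  unfolding lbnd_def
proof (intro allI impI)
  fix p q assume nc: "nc p q" and q: "1 \<le> q" and T: "q < Q m + Q (Suc m)"
  obtain x y where h: "q = x * Q m + y * Q (Suc m)"
    "\<bar>of_int q * \<alpha> - of_int p\<bar> = \<bar>of_int x * dl m - of_int y * dl (Suc m)\<bar>"
    "(x,y) \<noteq> (1,0)" "(x,y) \<noteq> (0,1)" "(x,y) \<noteq> (- int (a m),1)" "(x,y) \<noteq> (1, int (a (Suc m)))"
    using transfer[OF m nc q] by blast
  interpret L: lbctx "int (a m)" "int (a (Suc m))" "Q (m-1)" "Q m" "Q (Suc m)" "dl m" "dl (Suc m)" "dl (Suc (Suc m))"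
    by (rule ctx[OF m])
  have q': "1 \<le> x * Q m + y * Q (Suc m)" using q h(1) by simp
  have T': "x * Q m + y * Q (Suc m) < Q m + Q (Suc m)" using T h(1) by simp
  have "L.err x y \<ge> dl m + dl (Suc m)" by (rule L.LB_C[OF q' T' h(3) h(4)])
  then show "dl m + dl (Suc m) \<le> \<bar>of_int q * \<alpha> - of_int p\<bar>" using h(2) unfolding L.err_def by simp
qed

lemma LD: assumes m: "m \<ge> 1" and A: "a m \<ge> 2" and B: "a (Suc m) = 1" shows "lbnd (Q (Suc m) + 2 * Q m) (dl m + dl (Suc m))"
  unfolding lbnd_def
proof (intro allI impI)
  fix p q assume nc: "nc p q" and q: "1 \<le> q" and T: "q < Q (Suc m) + 2 * Q m"
  obtain x y where h: "q = x * Q m + y * Q (Suc m)"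
    "\<bar>of_int q * \<alpha> - of_int p\<bar> = \<bar>of_int x * dl m - of_int y * dl (Suc m)\<bar>"
    "(x,y) \<noteq> (1,0)" "(x,y) \<noteq> (0,1)" "(x,y) \<noteq> (- int (a m),1)" "(x,y) \<noteq> (1, int (a (Suc m)))"
    using transfer[OF m nc q] by blast
  interpret L: lbctx "int (a m)" "int (a (Suc m))" "Q (m-1)" "Q m" "Q (Suc m)" "dl m" "dl (Suc m)" "dl (Suc (Suc m))"
    by (rule ctx[OF m])
  have q': "1 \<le> x * Q m + y * Q (Suc m)" using q h(1) by simp
  have T': "x * Q m + y * Q (Suc m) < Q (Suc m) + 2 * Q m" using T h(1) by simp
  have "L.err x y \<ge> dl m + dl (Suc m)" by (rule L.LB_D[OF _ _ q' T' h(3) h(4) h(6)]) (use A B in auto)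
  then show "dl m + dl (Suc m) \<le> \<bar>of_int q * \<alpha> - of_int p\<bar>" using h(2) unfolding L.err_def by simp
qed

lemma LE: assumes m: "m \<ge> 1" and A: "a m = 1" and B: "a (Suc m) \<ge> 2" shows "lbnd (Q m + Q (Suc m)) (dl m + 2 * dl (Suc m))"
  unfolding lbnd_def
proof (intro allI impI)
  fix p q assume nc: "nc p q" and q: "1 \<le> q" and T: "q < Q m + Q (Suc m)"
  obtain x y where h: "q = x * Q m + y * Q (Suc m)"
    "\<bar>of_int q * \<alpha> - of_int p\<bar> = \<bar>of_int x * dl m - of_int y * dl (Suc m)\<bar>"
    "(x,y) \<noteq> (1,0)" "(x,y) \<noteq> (0,1)" "(x,y) \<noteq> (- int (a m),1)" "(x,y) \<noteq> (1, int (a (Suc m)))"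
    using transfer[OF m nc q] by blast
  interpret L: lbctx "int (a m)" "int (a (Suc m))" "Q (m-1)" "Q m" "Q (Suc m)" "dl m" "dl (Suc m)" "dl (Suc (Suc m))"
    by (rule ctx[OF m])
  have q': "1 \<le> x * Q m + y * Q (Suc m)" using q h(1) by simp
  have T': "x * Q m + y * Q (Suc m) < Q m + Q (Suc m)" using T h(1) by simp
  have "L.err x y \<ge> dl m + 2 * dl (Suc m)" by (rule L.LB_E[OF _ _ q' T' h(3) h(4) h(5)]) (use A B in auto)
  then show "dl m + 2 * dl (Suc m) \<le> \<bar>of_int q * \<alpha> - of_int p\<bar>" using h(2) unfolding L.err_def by simp
qed

lemma LF: assumes m: "m \<ge> 1" and A: "a m = 1" shows "lbnd (2 * Q m) (dl m + 2 * dl (Suc m))"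
  unfolding lbnd_def
proof (intro allI impI)
  fix p q assume nc: "nc p q" and q: "1 \<le> q" and T: "q < 2 * Q m"
  obtain x y where h: "q = x * Q m + y * Q (Suc m)"
    "\<bar>of_int q * \<alpha> - of_int p\<bar> = \<bar>of_int x * dl m - of_int y * dl (Suc m)\<bar>"
    "(x,y) \<noteq> (1,0)" "(x,y) \<noteq> (0,1)" "(x,y) \<noteq> (- int (a m),1)" "(x,y) \<noteq> (1, int (a (Suc m)))"
    using transfer[OF m nc q] by blast
  interpret L: lbctx "int (a m)" "int (a (Suc m))" "Q (m-1)" "Q m" "Q (Suc m)" "dl m" "dl (Suc m)" "dl (Suc (Suc m))"
    by (rule ctx[OF m])
  have q': "1 \<le> x * Q m + y * Q (Suc m)" using q h(1) by simp
  have T': "x * Q m + y * Q (Suc m) < 2 * Q m" using T h(1) by simp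
  have "L.err x y \<ge> dl m + 2 * dl (Suc m)" by (rule L.LB_F[OF _ q' T' h(3) h(4) h(5)]) (use A in auto)
  then show "dl m + 2 * dl (Suc m) \<le> \<bar>of_int q * \<alpha> - of_int p\<bar>" using h(2) unfolding L.err_def by simp
qed

lemma LG: assumes m: "m \<ge> 1" and A: "a m = 1" and B: "a (Suc m) = 1" shows "lbnd (2 * Q (Suc m)) (2 * dl m)"
  unfolding lbnd_def
proof (intro allI impI)
  fix p q assume nc: "nc p q" and q: "1 \<le> q" and T: "q < 2 * Q (Suc m)"
  obtain x y where h: "q = x * Q m + y * Q (Suc m)"
    "\<bar>of_int q * \<alpha> - of_int p\<bar> = \<bar>of_int x * dl m - of_int y * dl (Suc m)\<bar>"
    "(x,y) \<noteq> (1,0)" "(x,y) \<noteq> (0,1)" "(x,y) \<noteq> (- int (a m),1)" "(x,y) \<noteq> (1, int (a (Suc m)))"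
    using transfer[OF m nc q] by blast
  interpret L: lbctx "int (a m)" "int (a (Suc m))" "Q (m-1)" "Q m" "Q (Suc m)" "dl m" "dl (Suc m)" "dl (Suc (Suc m))"
    by (rule ctx[OF m])
  have q': "1 \<le> x * Q m + y * Q (Suc m)" using q h(1) by simp
  have T': "x * Q m + y * Q (Suc m) < 2 * Q (Suc m)" using T h(1) by simp
  have "L.err x y \<ge> 2 * dl m" by (rule L.LB_G[OF _ _ q' T' h(3) h(4) h(5) h(6)]) (use A B in auto)
  then show "2 * dl m \<le> \<bar>of_int q * \<alpha> - of_int p\<bar>" using h(2) unfolding L.err_def by simp
qed

lemma LH: assumes m: "m \<ge> 1" and A: "a m = 1" shows "lbnd (Q (Suc m) + Q (m - 1)) (2 * dl m)"
  unfolding lbnd_def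
proof (intro allI impI)
  fix p q assume nc: "nc p q" and q: "1 \<le> q" and T: "q < Q (Suc m) + Q (m - 1)"
  obtain x y where h: "q = x * Q m + y * Q (Suc m)"
    "\<bar>of_int q * \<alpha> - of_int p\<bar> = \<bar>of_int x * dl m - of_int y * dl (Suc m)\<bar>"
    "(x,y) \<noteq> (1,0)" "(x,y) \<noteq> (0,1)" "(x,y) \<noteq> (- int (a m),1)" "(x,y) \<noteq> (1, int (a (Suc m)))"
    using transfer[OF m nc q] by blast
  interpret L: lbctx "int (a m)" "int (a (Suc m))" "Q (m-1)" "Q m" "Q (Suc m)" "dl m" "dl (Suc m)" "dl (Suc (Suc m))"
    by (rule ctx[OF m])
  have q': "1 \<le> x * Q m + y * Q (Suc m)" using q h(1) by simp
  have T': "x * Q m + y * Q (Suc m) < Q (Suc m) + Q (m - 1)" using T h(1) by simp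
  have "L.err x y \<ge> 2 * dl m" by (rule L.LB_H[OF _ q' T' h(3) h(4) h(5)]) (use A in auto)
  then show "2 * dl m \<le> \<bar>of_int q * \<alpha> - of_int p\<bar>" using h(2) unfolding L.err_def by simp
qed

end

context cfa begin

definition "wG n = (Pp n + Pp (n-1), Q n + Q (n-1))"
definition "wD j = (2 * Pp j, 2 * Q j)"
definition "wH n = (Pp (Suc n) - Pp n, Q (Suc n) - Q n)"
definition "wF n = (Pp n + 2 * Pp (n-1), Q n + 2 * Q (n-1))"

lemma dl_rec': "n \<ge> 1 \<Longrightarrow> dl (n-1) = of_nat (a n) * dl n + dl (Suc n)"
  using dl_rec[of "n-1"] by simp

lemma er_lin: "er (x * Pp i + y * Pp j, x * Q i + y * Q j) = \<bar>of_int x * eps i + of_int y * eps j\<bar>"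
  by (simp add: er_def eps_def algebra_simps)

lemma er_wG: assumes "n \<ge> 1" shows "er (wG n) = dl (n-1) - dl n"
proof -
  obtain k where n: "n = Suc k" using assms by (cases n) auto
  have "er (wG n) = \<bar>of_int 1 * eps (Suc k) + of_int 1 * eps k\<bar>"
    using er_lin[of 1 "Suc k" 1 k] by (simp add: wG_def n)
  also have "\<dots> = \<bar>(-1)^(Suc k) * (dl k - dl (Suc k))\<bar>" by (simp add: eps_sign algebra_simps)
  also have "\<dots> = dl k - dl (Suc k)" using dl_dec[of k] by (simp add: abs_mult)
  finally show ?thesis using n by simp
qed

lemma er_wD: "er (wD j) = 2 * dl j"
proof -
  have "er (wD j) = \<bar>of_int 2 * eps j + of_int 0 * eps j\<bar>"
    using er_lin[of 2 j 0 j] by (simp add: wD_def)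
  then show ?thesis by (simp add: dl_def abs_mult)
qed

lemma er_wH: "er (wH n) = dl n + dl (Suc n)"
proof -
  have "er (wH n) = \<bar>of_int 1 * eps (Suc n) + of_int (-1) * eps n\<bar>"
    using er_lin[of 1 "Suc n" "-1" n] by (simp add: wH_def)
  also have "\<dots> = \<bar>(-1)^n * (dl n + dl (Suc n))\<bar>" by (simp add: eps_sign algebra_simps)
  also have "\<dots> = dl n + dl (Suc n)" using dl_pos[of n] dl_pos[of "Suc n"] by (simp add: abs_mult)
  finally show ?thesis .
qed

lemma er_wF0: assumes "n \<ge> 1" shows "er (wF n) = 2 * dl (n-1) - dl n"
proof -
  obtain k where n: "n = Suc k" using assms by (cases n) auto
  have "er (wF n) = \<bar>of_int 1 * eps (Suc k) + of_int 2 * eps k\<bar>"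
    using er_lin[of 1 "Suc k" 2 k] by (simp add: wF_def n)
  also have "\<dots> = \<bar>(-1)^(Suc k) * (2 * dl k - dl (Suc k))\<bar>" by (simp add: eps_sign algebra_simps)
  also have "\<dots> = 2 * dl k - dl (Suc k)" using dl_dec[of k] dl_pos[of k] by (simp add: abs_mult)
  finally show ?thesis using n by simp
qed

lemma er_wF: assumes "n \<ge> 1" "a n = 1" shows "er (wF n) = dl n + 2 * dl (Suc n)"
  using er_wF0[OF assms(1)] dl_rec'[OF assms(1)] assms(2) by simp

lemma snd_w: "snd (wG n) = Q n + Q (n-1)" "snd (wD n) = 2 * Q n"
  "snd (wH n) = Q (Suc n) - Q n" "snd (wF n) = Q n + 2 * Q (n-1)"
  by (simp_all add: wG_def wD_def wH_def wF_def)

lemma nc_between: "Q j < q \<Longrightarrow> q < Q (Suc j) \<Longrightarrow> nc p q"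
  unfolding nc_def using Q_between by blast

lemma nc_1: "p \<noteq> 0 \<Longrightarrow> (a 1 = 1 \<Longrightarrow> p \<noteq> 1) \<Longrightarrow> nc p 1"
  unfolding nc_def
proof (intro allI notI)
  fix n assume h: "p \<noteq> 0" "a 1 = 1 \<Longrightarrow> p \<noteq> 1" "(p, 1) = (Pp (Suc n), Q (Suc n))"
  then have "Q (Suc n) = 1" by simp
  then have "Suc n = 1 \<or> (Suc n = 2 \<and> a 1 = 1)" by (rule Q_eq1)
  then show False
  proof
    assume "Suc n = 1" then show False using h by simp
  next
    assume "Suc n = 2 \<and> a 1 = 1" then show False using h by (auto simp: numeral_eq_Suc)
  qed
qed

lemma val_wD: assumes "j \<ge> 1" shows "valid (wD j)"
proof -
  have "nc (2 * Pp j) (2 * Q j)"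
    unfolding nc_def
  proof (intro allI notI)
    fix n assume h: "(2 * Pp j, 2 * Q j) = (Pp (Suc n), Q (Suc n))"
    from h have e1: "Pp (Suc n) = 2 * Pp j" "Q (Suc n) = 2 * Q j" by auto
    have "(-1)^n = Pp n * Q (Suc n) - Pp (Suc n) * Q n" using det[of n] by simp
    also have "\<dots> = 2 * (Pp n * Q j - Pp j * Q n)" unfolding e1 by (simp add: algebra_simps)
    finally have "2 * (Pp n * Q j - Pp j * Q n) = (-1)^n" by simp
    moreover have "(-1::int)^n = 1 \<or> (-1::int)^n = -1"
      by (cases "even n") auto
    ultimately show False by presburger
  qed
  moreover have "2 * Q j \<ge> 1" using Q_pos[OF assms] by simp
  ultimately show ?thesis by (simp add: valid_def wD_def)
qed

lemma val_wG: assumes n: "n \<ge> 1" and A: "a n \<ge> 2" shows "valid (wG n)"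
proof (cases "n = 1")
  case True
  then have "wG n = (1, 1)" by (simp add: wG_def)
  moreover have "nc 1 1" using A True by (intro nc_1) auto
  ultimately show ?thesis by (simp add: valid_def)
next
  case False
  then have n2: "n \<ge> 2" using n by simp
  have q0: "Q (n-1) \<ge> 1" using Q_pos[of "n-1"] n2 by simp
  have qn: "Q n \<ge> 1" using Q_pos[of n] n by simp
  have "int (a n) * Q n \<ge> 2 * Q n" using A qn by (intro mult_right_mono) auto
  then have "Q n + Q (n-1) < Q (Suc n)" using Q_rec[OF n] qn by simp
  moreover have "Q n < Q n + Q (n-1)" using q0 by simp
  ultimately have "nc (Pp n + Pp (n-1)) (Q n + Q (n-1))" by (rule nc_between[rotated])
  then show ?thesis using q0 qn by (simp add: valid_def wG_def)
qed

lemma val_wH: assumes n: "n \<ge> 1" and A: "a n \<ge> 2" shows "valid (wH n)"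
proof (cases "n = 1")
  case True
  show ?thesis
  proof (cases "a 1 = 2")
    case True2: True
    then have "wH n = (1, 1)" using True by (simp add: wH_def)
    moreover have "nc 1 1" using True2 by (intro nc_1) auto
    ultimately show ?thesis by (simp add: valid_def)
  next
    case False
    then have a3: "a 1 \<ge> 3" using A True by simp
    have "wH n = (1, int (a 1) - 1)" using True by (simp add: wH_def)
    moreover have "nc 1 (int (a 1) - 1)"
      by (rule nc_between[of 1]) (use a3 in \<open>simp_all add: numeral_eq_Suc\<close>)
    ultimately show ?thesis using a3 by (simp add: valid_def)
  qed
next
  case False
  then have n2: "n \<ge> 2" using n by simp
  have q0: "Q (n-1) \<ge> 1" using Q_pos[of "n-1"] n2 by simp
  have qn: "Q n \<ge> 1" using Q_pos[of n] n by simp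
  have "int (a n) * Q n \<ge> 2 * Q n" using A qn by (intro mult_right_mono) auto
  then have "Q n < Q (Suc n) - Q n" using Q_rec[OF n] q0 by simp
  moreover have "Q (Suc n) - Q n < Q (Suc n)" using qn by simp
  ultimately have "nc (Pp (Suc n) - Pp n) (Q (Suc n) - Q n)" by (rule nc_between)
  then show ?thesis using \<open>Q n < Q (Suc n) - Q n\<close> qn by (simp add: valid_def wH_def)
qed

lemma val_wF: assumes n: "n \<ge> 1" and A: "a n = 1" and B: "n = 1 \<or> a (n-1) \<ge> 2 \<or> a (Suc n) \<ge> 2"
  shows "valid (wF n)"
proof (cases "n = 1")
  case True
  then have "wF n = (2, 1)" by (simp add: wF_def)
  moreover have "nc 2 1" by (intro nc_1) auto
  ultimately show ?thesis by (simp add: valid_def)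
next
  case False
  then have n2: "n \<ge> 2" using n by auto
  have q0: "Q (n-1) \<ge> 1" using Q_pos[of "n-1"] n2 by simp
  have qn: "Q n \<ge> 1" using Q_pos[of n] n by simp
  have r1: "Q (Suc n) = Q n + Q (n-1)" using Q_rec[OF n] A by simp
  have r3: "Q (Suc (Suc n)) = int (a (Suc n)) * Q (Suc n) + Q n" by simp
  have "Q n + 2 * Q (n-1) < Q (Suc (Suc n))"
  proof (cases "a (n-1) \<ge> 2")
    case B2: True
    have "int (a (n-1)) * Q (n-1) \<ge> 2 * Q (n-1)" using B2 q0 by (intro mult_right_mono) auto
    then have qq: "Q n \<ge> 2 * Q (n-1)" using Q_rec[of "n-1"] n2 qs_nonneg[of "cf_a \<alpha>" "n-2"]
      by (simp add: Suc_diff_Suc numeral_2_eq_2)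
    have "int (a (Suc n)) * Q (Suc n) \<ge> 1 * Q (Suc n)"
      by (rule mult_right_mono) (use a_pos[of "Suc n"] qs_nonneg[of "cf_a \<alpha>" "Suc n"] in auto)
    then show ?thesis using r1 r3 qq q0 by linarith
  next
    case False
    then have B3: "a (Suc n) \<ge> 2" using B n2 by auto
    have "int (a (Suc n)) * Q (Suc n) \<ge> 2 * Q (Suc n)"
      by (rule mult_right_mono) (use B3 qs_nonneg[of "cf_a \<alpha>" "Suc n"] in auto)
    then show ?thesis using r1 r3 q0 qn Q_mono[of "n-1" n] by linarith
  qed
  moreover have "Q (Suc n) < Q n + 2 * Q (n-1)" using r1 q0 by simp
  ultimately have "nc (Pp n + 2 * Pp (n-1)) (Q n + 2 * Q (n-1))" by (intro nc_between)
  then show ?thesis using q0 qn by (simp add: valid_def wF_def)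
qed

lemma lbnd_eq: "lbnd T E \<Longrightarrow> T = T' \<Longrightarrow> E = E' \<Longrightarrow> lbnd T' E'" by simp

lemma rge: "(k::nat) \<ge> c \<Longrightarrow> of_nat k * (d::real) \<ge> of_nat c * d" if "d \<ge> 0" for d
  using that by (intro mult_right_mono) auto

lemma ige: "(k::nat) \<ge> c \<Longrightarrow> int k * (d::int) \<ge> int c * d" if "d \<ge> 0" for d
  using that by (intro mult_right_mono) auto

lemma C1: assumes n: "n \<ge> 1" and A: "a n \<ge> 3" shows "chain (wG n) (wD n)"
proof -
  have m: "Q n + Q (n-1) \<le> 2 * Q n" using Q_mono[of "n-1" n] by simp
  have r: "dl (n-1) = of_nat (a n) * dl n + dl (Suc n)" by (rule dl_rec'[OF n])
  have "of_nat (a n) * dl n \<ge> of_nat 3 * dl n" using rge[OF _ A] dl_pos[of n] by simp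
  then have d: "2 * dl n < dl (n-1) - dl n" using r dl_pos[of "Suc n"] by simp
  have l: "lbnd (2 * Q n) (dl (n-1) - dl n)"
    by (rule lbnd_eq[OF LBB[OF n]]) (use A r in \<open>auto simp: algebra_simps\<close>)
  show ?thesis unfolding chain_def snd_w er_wG[OF n] er_wD using m d l by simp
qed

lemma C2: assumes n: "n \<ge> 1" and A: "a n \<ge> 3" shows "chain (wD n) (wH n)"
proof -
  have "int (a n) * Q n \<ge> int 3 * Q n" using ige[OF _ A] qs_nonneg[of "cf_a \<alpha>" n] by simp
  then have m: "2 * Q n \<le> Q (Suc n) - Q n" using Q_rec[OF n] qs_nonneg[of "cf_a \<alpha>" "n-1"] by simp
  have d: "dl n + dl (Suc n) < 2 * dl n" using dl_dec[of n] by simp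
  show ?thesis unfolding chain_def snd_w er_wH er_wD using m d LA[OF n] by simp
qed

lemma C3: assumes N: "N \<ge> 1" shows "chain (wH N) (wG (Suc N))"
proof -
  have m: "Q (Suc N) - Q N \<le> Q (Suc N) + Q N" using qs_nonneg[of "cf_a \<alpha>" N] by simp
  have d: "dl N - dl (Suc N) < dl N + dl (Suc N)" using dl_pos[of "Suc N"] by simp
  have l: "lbnd (Q (Suc N) + Q N) (dl N + dl (Suc N))"
    by (rule lbnd_eq[OF LC[OF N]]) auto
  show ?thesis unfolding chain_def snd_w er_wH er_wG[of "Suc N", simplified] using m d l by simp
qed

lemma C4: assumes N: "N \<ge> 1" and A: "a (Suc N) = 2" shows "chain (wH N) (wH (Suc N))"
proof -
  have s: "Q (Suc (Suc N)) - Q (Suc N) = Q (Suc N) + Q N" using A by simp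
  have m: "Q (Suc N) - Q N \<le> Q (Suc N) + Q N" using qs_nonneg[of "cf_a \<alpha>" N] by simp
  have d: "dl (Suc N) + dl (Suc (Suc N)) < dl N + dl (Suc N)" using dl_dec[of N] dl_dec[of "Suc N"] by simp
  have l: "lbnd (Q (Suc N) + Q N) (dl N + dl (Suc N))"
    by (rule lbnd_eq[OF LC[OF N]]) auto
  show ?thesis unfolding chain_def snd_w er_wH s using m d l by simp
qed

lemma C5: assumes N: "N \<ge> 1" and A: "a N \<ge> 2" and B: "a (Suc N) = 1" shows "chain (wH N) (wF (Suc N))"
proof -
  have m: "Q (Suc N) - Q N \<le> Q (Suc N) + 2 * Q N" using qs_nonneg[of "cf_a \<alpha>" N] by simp
  have r: "dl N = dl (Suc N) + dl (Suc (Suc N))" using dl_rec[of N] B by simp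
  have d: "dl (Suc N) + 2 * dl (Suc (Suc N)) < dl N + dl (Suc N)" using r dl_dec[of "Suc N"] by simp
  have l: "lbnd (Q (Suc N) + 2 * Q N) (dl N + dl (Suc N))" by (rule LD[OF N A B])
  show ?thesis unfolding chain_def snd_w er_wH er_wF[of "Suc N", OF _ B, simplified] using m d l by simp
qed

lemma C6a: assumes e: "e \<ge> 1" and A: "a e = 1" and B: "a (Suc e) \<ge> 2" shows "chain (wF e) (wG (Suc e))"
proof -
  have r1: "Q (Suc e) = Q e + Q (e-1)" using Q_rec[OF e] A by simp
  have m: "Q e + 2 * Q (e-1) \<le> Q (Suc e) + Q e" using r1 Q_mono[of "e-1" e] by simp
  have d: "dl e - dl (Suc e) < dl e + 2 * dl (Suc e)" using dl_pos[of "Suc e"] by simp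
  have l: "lbnd (Q (Suc e) + Q e) (dl e + 2 * dl (Suc e))"
    by (rule lbnd_eq[OF LE[OF e A B]]) auto
  show ?thesis unfolding chain_def snd_w er_wF[OF e A] er_wG[of "Suc e", simplified] using m d l by simp
qed

lemma C6b: assumes e: "e \<ge> 1" and A: "a e = 1" and B: "a (Suc e) = 2" shows "chain (wF e) (wH (Suc e))"
proof -
  have r1: "Q (Suc e) = Q e + Q (e-1)" using Q_rec[OF e] A by simp
  have s: "Q (Suc (Suc e)) - Q (Suc e) = Q (Suc e) + Q e" using B by simp
  have m: "Q e + 2 * Q (e-1) \<le> Q (Suc e) + Q e" using r1 Q_mono[of "e-1" e] by simp
  have d: "dl (Suc e) + dl (Suc (Suc e)) < dl e + 2 * dl (Suc e)" using dl_dec[of e] dl_dec[of "Suc e"] dl_pos[of e] by simp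
  have l: "lbnd (Q (Suc e) + Q e) (dl e + 2 * dl (Suc e))"
    by (rule lbnd_eq[OF LE[OF e A]]) (use B in auto)
  show ?thesis unfolding chain_def snd_w er_wF[OF e A] er_wH s using m d l by simp
qed

lemma C7: assumes n: "n \<ge> 1" and A: "a n = 1" and B: "a (Suc n) = 1" and C: "n = 1 \<or> a (n-1) \<ge> 2"
  shows "chain (wF n) (wD n)"
proof -
  have q2: "2 * Q (n-1) \<le> Q n"
  proof (cases "n = 1")
    case True then show ?thesis by simp
  next
    case False
    then have n2: "n - 1 \<ge> 1" "a (n-1) \<ge> 2" using n C by auto
    have "int (a (n-1)) * Q (n-1) \<ge> int 2 * Q (n-1)" using ige[OF _ n2(2)] qs_nonneg[of "cf_a \<alpha>" "n-1"] by simp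
    then show ?thesis using Q_rec[OF n2(1)] qs_nonneg[of "cf_a \<alpha>" "n-1-1"] False n by simp
  qed
  then have m: "Q n + 2 * Q (n-1) \<le> 2 * Q n" by simp
  have r: "dl n = dl (Suc n) + dl (Suc (Suc n))" using dl_rec[of n] B by simp
  have d: "2 * dl n < dl n + 2 * dl (Suc n)" using r dl_dec[of "Suc n"] by simp
  show ?thesis unfolding chain_def snd_w er_wF[OF n A] er_wD using m d LF[OF n A] by simp
qed

lemma C8: assumes j: "j \<ge> 1" and A: "a j = 1" and B: "a (Suc j) = 1" shows "chain (wD j) (wD (Suc j))"
  unfolding chain_def snd_w er_wD using Q_mono1[of j] dl_dec[of j] LG[OF j A B] by simp

lemma C9: assumes j: "j \<ge> 2" and A: "a j = 1" and A': "a (j-1) = 1" and B: "a (Suc j) \<ge> 2"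
  shows "chain (wD j) (wF j)"
proof -
  have j1: "j \<ge> 1" "j - 1 \<ge> 1" using j by auto
  have r1: "Q (Suc j) = Q j + Q (j-1)" using Q_rec[OF j1(1)] A by simp
  have r0: "Q j = Q (j-1) + Q (j-1-1)" using Q_rec[OF j1(2)] A' j by simp
  have m: "2 * Q j \<le> Q j + 2 * Q (j-1)" using r0 Q_mono[of "j-1-1" "j-1"] by simp
  have "of_nat (a (Suc j)) * dl (Suc j) \<ge> of_nat 2 * dl (Suc j)" using rge[OF _ B] dl_pos[of "Suc j"] by simp
  then have d: "dl j + 2 * dl (Suc j) < 2 * dl j" using dl_rec[of j] dl_pos[of "Suc (Suc j)"] by linarith
  have l: "lbnd (Q j + 2 * Q (j-1)) (2 * dl j)"
    by (rule lbnd_eq[OF LH[OF j1(1) A]]) (use r1 in auto)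
  show ?thesis unfolding chain_def snd_w er_wF[OF j1(1) A] er_wD using m d l by simp
qed

end

lemma sm_le: fixes f g :: "nat \<Rightarrow> nat"
  assumes f: "strict_mono f" and g: "strict_mono g" and r: "range f \<subseteq> range g"
  shows "g n \<le> f n"
proof -
  have "\<forall>i. \<exists>k. g k = f i" using r by (metis UNIV_I image_iff subsetD rangeI)
  then obtain \<pi> where \<pi>: "\<And>i. g (\<pi> i) = f i" by metis
  have "strict_mono \<pi>"
    unfolding strict_mono_def
  proof (intro allI impI)
    fix i j :: nat assume "i < j"
    then have "g (\<pi> i) < g (\<pi> j)" using \<pi> f by (simp add: strict_mono_less)
    then show "\<pi> i < \<pi> j" using g by (simp add: strict_mono_less)
  qed
  then have "n \<le> \<pi> n" by (rule strict_mono_imp_increasing)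
  then have "g n \<le> g (\<pi> n)" using g by (simp add: strict_mono_less_eq)
  then show ?thesis using \<pi> by simp
qed

lemma sm_unique: fixes f g :: "nat \<Rightarrow> nat"
  assumes "strict_mono f" "strict_mono g" "range f = range g"
  shows "f = g"
proof
  fix n show "f n = g n" using sm_le[of f g n] sm_le[of g f n] assms by simp
qed

lemma final_enum:
  fixes b :: "nat \<Rightarrow> int" and Fq :: "nat set"
  assumes bm: "mono b" and unb: "\<And>K. \<exists>i. b i \<ge> K" and pos: "\<And>i. b i \<ge> 1"
    and Fq: "Fq = {t. int t \<in> range b}"
  shows "infinite (first_occ b) \<and> infinite Fq \<and> (\<forall>k. b (enumerate (first_occ b) k) = int (enumerate Fq k))"
proof -
  let ?F = "first_occ b"
  define lf where "lf i = (LEAST j. b j = b i)" for i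
  have lf1: "b (lf i) = b i" for i unfolding lf_def by (rule LeastI) simp
  have lfF: "lf i \<in> ?F" for i
    unfolding first_occ_def
  proof (intro CollectI allI impI)
    fix k assume "k < lf i"
    then have "b k \<noteq> b i" unfolding lf_def using not_less_Least by blast
    then show "b k \<noteq> b (lf i)" using lf1 by simp
  qed
  have Finf: "infinite ?F"
    unfolding infinite_nat_iff_unbounded
  proof
    fix N
    obtain i where i: "b i \<ge> b N + 1" using unb by blast
    have "lf i > N"
    proof (rule ccontr)
      assume "\<not> N < lf i"
      then have "b (lf i) \<le> b N" using bm by (simp add: monoD)
      then show False using lf1 i by simp
    qed
    then show "\<exists>m>N. m \<in> ?F" using lfF by blast
  qed
  let ?e = "enumerate ?F"
  define g where "g k = nat (b (?e k))" for k
  have gb: "int (g k) = b (?e k)" for k unfolding g_def using pos[of "?e k"] by simp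
  have sm: "strict_mono g"
    unfolding strict_mono_def
  proof (intro allI impI)
    fix k k' :: nat assume "k < k'"
    then have lt: "?e k < ?e k'" using Finf by (simp add: enumerate_mono)
    then have "b (?e k) \<le> b (?e k')" using bm by (simp add: monoD)
    moreover have "b (?e k) \<noteq> b (?e k')"
      using enumerate_in_set[OF Finf, of k'] lt unfolding first_occ_def by blast
    ultimately have "b (?e k) < b (?e k')" by simp
    then show "g k < g k'" using gb[of k] gb[of k'] by simp
  qed
  have rg: "range g = Fq"
  proof (intro set_eqI iffI)
    fix t assume "t \<in> range g"
    then obtain k where "t = g k" by auto
    then have "int t = b (?e k)" using gb by simp
    then show "t \<in> Fq" unfolding Fq by (metis (mono_tags) mem_Collect_eq rangeI)
  next
    fix t assume "t \<in> Fq"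
    then obtain i where i: "int t = b i" unfolding Fq by auto
    obtain k where "?e k = lf i" using enumerate_Ex[OF Finf lfF] by blast
    then have "int (g k) = int t" using gb[of k] lf1 i by simp
    then show "t \<in> range g" by (metis of_nat_eq_iff rangeI)
  qed
  have Fqinf: "infinite Fq"
  proof
    assume "finite Fq"
    then have "finite (range g)" using rg by simp
    moreover have "inj g" using sm by (rule strict_mono_imp_inj_on)
    ultimately show False using finite_imageD by fastforce
  qed
  have "enumerate Fq = g"
    by (rule sm_unique) (use strict_mono_enumerate[OF Fqinf] range_enumerate[OF Fqinf] sm rg in auto)
  then show ?thesis using Finf Fqinf gb by simp
qed

context cfa begin

definition Sset :: "real \<Rightarrow> real set" where
  "Sset t = {\<bar>of_int q * \<alpha> - of_int p\<bar> | p q. 1 \<le> q \<and> of_int q \<le> t \<and> nc p q}"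

lemma psi2_eq: "psi2 \<alpha> t = Inf (Sset t)"
proof -
  have "\<And>p q. (\<forall>n::nat. (p, q) \<noteq> (cf_p \<alpha> (int n), cf_q \<alpha> (int n))) \<longleftrightarrow> nc p q"
  proof -
    have e: "\<And>n::nat. nat (int n + 1) = Suc n" by simp
    show "\<And>p q. (\<forall>n::nat. (p, q) \<noteq> (cf_p \<alpha> (int n), cf_q \<alpha> (int n))) \<longleftrightarrow> nc p q"
      by (simp add: cf_p_def cf_q_def nc_def e)
  qed
  then show ?thesis unfolding psi2_def Sset_def by simp
qed

lemma Sset_bdd: "bdd_below (Sset t)"
  unfolding Sset_def by (rule bdd_belowI[of _ 0]) auto

lemma Sset_mem: "valid w \<Longrightarrow> of_int (snd w) \<le> t \<Longrightarrow> er w \<in> Sset t"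
  unfolding Sset_def valid_def er_def by (cases w) auto

lemma rec_thm:
  fixes W :: "nat \<Rightarrow> int \<times> int"
  assumes val: "\<And>i. valid (W i)" and ch: "\<And>i. chain (W i) (W (Suc i))"
    and w0: "snd (W 0) = 1" and unb: "\<And>K. \<exists>i. snd (W i) \<ge> K"
  shows "frakQ \<alpha> = {t. int t \<in> range (snd \<circ> W)}"
proof -
  let ?b = "snd \<circ> W"
  have bmono: "mono ?b"
    by (rule mono_iff_le_Suc[THEN iffD2]) (use ch in \<open>auto simp: chain_def\<close>)
  have main: "t \<in> frakQ \<alpha> \<longleftrightarrow> int t \<in> range ?b" if t2: "t \<ge> 2" for t
  proof
    assume "int t \<in> range ?b"
    then obtain i where i: "?b i = int t" by auto
    define j where "j = (LEAST j. ?b j = int t)"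
    have bj: "?b j = int t" unfolding j_def by (rule LeastI[of _ i]) (use i in auto)
    have jmin: "\<And>k. k < j \<Longrightarrow> ?b k \<noteq> int t" unfolding j_def using not_less_Least by blast
    have "j \<noteq> 0"
    proof
      assume "j = 0" then show False using bj w0 t2 by simp
    qed
    then obtain k where jk: "j = Suc k" by (cases j) auto
    have "?b k \<le> ?b j" using ch[of k] jk by (simp add: chain_def)
    moreover have "?b k \<noteq> int t" using jmin jk by simp
    ultimately have bk: "?b k < int t" using bj by simp
    have c: "chain (W k) (W j)" using ch jk by simp
    have lb: "er (W k) \<le> x" if xs: "x \<in> Sset (real t - 1)" for x
    proof -
      obtain p q where x: "x = \<bar>of_int q * \<alpha> - of_int p\<bar>" and q: "1 \<le> q" "of_int q \<le> real t - 1" "nc p q"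
        using xs unfolding Sset_def by blast
      have "q < snd (W j)" using q(2) bj by simp
      then show ?thesis using c q unfolding chain_def lbnd_def x by blast
    qed
    have ne: "Sset (real t - 1) \<noteq> {}"
      using Sset_mem[OF val[of k], of "real t - 1"] bk by auto
    have "er (W k) \<le> psi2 \<alpha> (real t - 1)" unfolding psi2_eq by (rule cInf_greatest[OF ne lb])
    moreover have "psi2 \<alpha> (real t) \<le> er (W j)"
      unfolding psi2_eq by (rule cInf_lower[OF Sset_mem[OF val] Sset_bdd]) (use bj in simp)
    moreover have "er (W j) < er (W k)" using c unfolding chain_def by simp
    ultimately show "t \<in> frakQ \<alpha>" unfolding frakQ_def using t2 by simp
  next
    assume tq: "t \<in> frakQ \<alpha>"
    show "int t \<in> range ?b"
    proof (rule ccontr)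
    assume nr: "int t \<notin> range ?b"
    obtain i where "?b i \<ge> int t" using unb by auto
    define J where "J = (LEAST j. ?b j \<ge> int t)"
    have bJ: "?b J \<ge> int t" unfolding J_def by (rule LeastI[of _ i]) (use \<open>?b i \<ge> int t\<close> in auto)
    have Jmin: "\<And>k. k < J \<Longrightarrow> ?b k < int t" unfolding J_def using not_less_Least by fastforce
    have "J \<noteq> 0"
    proof
      assume "J = 0" then show False using bJ w0 t2 by simp
    qed
    then obtain k where Jk: "J = Suc k" by (cases J) auto
    have bk: "?b k < int t" using Jmin Jk by simp
    have "?b J \<noteq> int t"
    proof
      assume "?b J = int t"
      then have "int t \<in> range ?b" by (metis rangeI)
      then show False using nr by simp
    qed
    then have bJ': "?b J > int t" using bJ by simp
    have c: "chain (W k) (W J)" using ch Jk by simp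
    have wk: "er (W k) \<in> Sset (real t - 1)" using Sset_mem[OF val[of k], of "real t - 1"] bk by simp
    have ne: "Sset (real t) \<noteq> {}" using Sset_mem[OF val[of k], of "real t"] bk by auto
    have "psi2 \<alpha> (real t - 1) \<le> x" if xs: "x \<in> Sset (real t)" for x
    proof -
      obtain p q where x: "x = \<bar>of_int q * \<alpha> - of_int p\<bar>" and q: "1 \<le> q" "of_int q \<le> real t" "nc p q"
        using xs unfolding Sset_def by blast
      show ?thesis
      proof (cases "q \<le> int t - 1")
        case True
        then have "x \<in> Sset (real t - 1)" using q x unfolding Sset_def by force
        then show ?thesis unfolding psi2_eq by (rule cInf_lower[OF _ Sset_bdd])
      next
        case False
        then have "q < snd (W J)" using q(2) bJ' by simp
        then have "er (W k) \<le> x" using c q unfolding chain_def lbnd_def x by blast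
        moreover have "psi2 \<alpha> (real t - 1) \<le> er (W k)" unfolding psi2_eq by (rule cInf_lower[OF wk Sset_bdd])
        ultimately show ?thesis by simp
      qed
    qed
    then have "psi2 \<alpha> (real t - 1) \<le> psi2 \<alpha> (real t)" unfolding psi2_eq[of "real t"]
      by (rule cInf_greatest[OF ne])
    then show False using tq unfolding frakQ_def using t2 by auto
  qed
  qed
  have pos: "?b i \<ge> 1" for i using val[of i] by (simp add: valid_def)
  show ?thesis
  proof (intro set_eqI iffI)
    fix t assume t: "t \<in> frakQ \<alpha>"
    show "t \<in> {t. int t \<in> range ?b}"
    proof (cases "t \<ge> 2")
      case True then show ?thesis using main t by simp
    next
      case False
      then have "t = 1" using t unfolding frakQ_def by auto
      then show ?thesis using w0 by (auto intro: range_eqI[of _ _ 0])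
    qed
  next
    fix t assume t: "t \<in> {t. int t \<in> range ?b}"
    show "t \<in> frakQ \<alpha>"
    proof (cases "t \<ge> 2")
      case True then show ?thesis using main t by simp
    next
      case False
      from t obtain i where "int t = ?b i" by auto
      then have "t \<ge> 1" using pos[of i] by simp
      then have "t = 1" using False by simp
      then show ?thesis unfolding frakQ_def by simp
    qed
  qed
qed

end

context cfa begin

definition "runlen n = (LEAST r. a (n + r) \<noteq> 1)"
definition "rend n = n + runlen n - 1"
definition "isstart n \<longleftrightarrow> (a n = 1 \<and> a (n-1) \<noteq> 1 \<and> (\<exists>j>n. a j \<noteq> 1))"
definition "wblk n = (if n = 0 then [] else if 3 \<le> a n then [wG n, wD n, wH n]
   else if a n = 2 then [wH n]
   else if isstart n then (if runlen n = 1 then [wF n]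
        else [wF n] @ map (\<lambda>k. wD (n+k)) [0..<runlen n] @ [wF (n + runlen n - 1)])
   else [])"
definition "Hd n = (if 3 \<le> a n then wG n else if a n = 2 then wH n else wF n)"
definition "Lw n = (if 2 \<le> a n then wH n else wF (rend n))"
definition "wpre N = concat (map wblk [1..<Suc N])"
definition "winf n k = (if k = 0 then wF n else wD (n + k - 1))"

lemma cq: "cf_q \<alpha> z = Q (nat (z + 1))" by (simp add: cf_q_def)

lemma cq1: "n \<ge> 1 \<Longrightarrow> cf_q \<alpha> (int n - 2) = Q (n - 1)"
  unfolding cq by (rule arg_cong[of _ _ Q]) arith
lemma cq2: "cf_q \<alpha> (int n - 1) = Q n"
  unfolding cq by (rule arg_cong[of _ _ Q]) arith
lemma cq3: "cf_q \<alpha> (int n) = Q (Suc n)"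
  unfolding cq by (rule arg_cong[of _ _ Q]) arith
lemma cq4: "cf_q \<alpha> (int n - 1 + int k) = Q (n + k)"
  unfolding cq by (rule arg_cong[of _ _ Q]) arith
lemma cq5: "n + r \<ge> 2 \<Longrightarrow> cf_q \<alpha> (int n + int r - 3) = Q (n + r - 2)"
  unfolding cq by (rule arg_cong[of _ _ Q]) arith
lemma cq6: "n + r \<ge> 1 \<Longrightarrow> cf_q \<alpha> (int n + int r - 2) = Q (n + r - 1)"
  unfolding cq by (rule arg_cong[of _ _ Q]) arith

lemma rl_facts:
  assumes "a n = 1" "\<exists>j>n. a j \<noteq> 1"
  shows "runlen n \<ge> 1" "a (n + runlen n) \<noteq> 1" "\<And>k. k < runlen n \<Longrightarrow> a (n + k) = 1"
proof -
  obtain j where j: "j > n" "a j \<noteq> 1" using assms by blast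
  have ex: "a (n + (j - n)) \<noteq> 1" using j by simp
  show "a (n + runlen n) \<noteq> 1" unfolding runlen_def by (rule LeastI[of "\<lambda>r. a (n + r) \<noteq> 1" "j - n", OF ex])
  show "\<And>k. k < runlen n \<Longrightarrow> a (n + k) = 1" unfolding runlen_def using not_less_Least by blast
  show "runlen n \<ge> 1"
  proof (rule ccontr)
    assume "\<not> runlen n \<ge> 1"
    then have "runlen n = 0" by simp
    then show False using \<open>a (n + runlen n) \<noteq> 1\<close> assms by simp
  qed
qed

lemma blk_eq: "blk \<alpha> n = map snd (wblk n)"
proof (cases "n = 0")
  case True then show ?thesis by (simp add: blk_def wblk_def)
next
  case False
  then have n: "n \<ge> 1" by simp
  show ?thesis
  proof (cases "3 \<le> a n")
    case True
    then show ?thesis using n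
      by (simp add: blk_def wblk_def Let_def snd_w cq1 cq2 cq3)
  next
    case F3: False
    show ?thesis
    proof (cases "a n = 2")
      case True
      then show ?thesis using n F3 by (simp add: blk_def wblk_def Let_def snd_w cq1 cq2 cq3)
    next
      case F2: False
      show ?thesis
      proof (cases "isstart n")
        case True
        then have st: "a n = 1" "a (n - 1) \<noteq> 1" "\<exists>j>n. a j \<noteq> 1" unfolding isstart_def by auto
        have r1: "runlen n \<ge> 1" using rl_facts(1)[OF st(1) st(3)] .
        have b: "blk \<alpha> n = (let r = runlen n in if r = 1 then [2 * Q (n-1) + Q n]
            else [2 * Q (n-1) + Q n] @ map (\<lambda>k. 2 * Q (n + k)) [0..<r]
             @ [2 * cf_q \<alpha> (int n + int r - 3) + cf_q \<alpha> (int n + int r - 2)])"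
          using n F3 F2 st unfolding blk_def Let_def runlen_def[symmetric]
          by (simp add: cq1 cq2 cq4)
        show ?thesis
        proof (cases "runlen n = 1")
          case True
          then show ?thesis using b F3 F2 \<open>isstart n\<close> n by (simp add: wblk_def snd_w)
        next
          case False
          then have r2: "n + runlen n \<ge> 2" using r1 n by simp
          show ?thesis using b F3 F2 \<open>isstart n\<close> n False
            by (simp add: wblk_def snd_w cq5[OF r2] cq6 Let_def)
               (simp add: algebra_simps numeral_2_eq_2)
        qed
      qed (use n F3 F2 in \<open>auto simp: blk_def wblk_def Let_def isstart_def\<close>)
    qed
  qed
qed

lemma succ_map: "(\<And>k. Suc k < r \<Longrightarrow> P (f k) (f (Suc k))) \<Longrightarrow> successively P (map f [0..<r])"
proof (induction r)
  case 0 then show ?case by simp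
next
  case (Suc r)
  have "successively P (map f [0..<r])" using Suc by simp
  moreover have "r > 0 \<Longrightarrow> P (f (r - 1)) (f r)" using Suc.prems[of "r-1"] by simp
  moreover have "r > 0 \<Longrightarrow> last (map f [0..<r]) = f (r - 1)" by (cases r) auto
  ultimately show ?case
  proof (cases "r = 0")
    case False
    assume h: "successively P (map f [0..<r])" "r > 0 \<Longrightarrow> P (f (r - 1)) (f r)"
      "r > 0 \<Longrightarrow> last (map f [0..<r]) = f (r - 1)"
    then show ?thesis using False by (simp add: successively_append_iff)
  qed simp
qed

lemma wblk_ne: "n \<ge> 1 \<Longrightarrow> wblk n \<noteq> [] \<longleftrightarrow> (2 \<le> a n \<or> isstart n)"
  using a_pos[of n] by (auto simp: wblk_def isstart_def)

lemma blk_facts: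
  assumes n: "n \<ge> 1" and ne: "wblk n \<noteq> []"
  shows "successively chain (wblk n) \<and> (\<forall>w\<in>set (wblk n). valid w) \<and> hd (wblk n) = Hd n \<and> last (wblk n) = Lw n"
proof (cases "3 \<le> a n")
  case True
  then show ?thesis using C1[OF n] C2[OF n] val_wG[OF n] val_wD[OF n] val_wH[OF n] n
    by (simp add: wblk_def Hd_def Lw_def)
next
  case F3: False
  show ?thesis
  proof (cases "a n = 2")
    case True
    then show ?thesis using val_wH[OF n] n by (simp add: wblk_def Hd_def Lw_def)
  next
    case F2: False
    then have st: "isstart n" using wblk_ne[OF n] ne F3 by auto
    then have st': "a n = 1" "a (n - 1) \<noteq> 1" "\<exists>j>n. a j \<noteq> 1" unfolding isstart_def by auto
    note rl = rl_facts[OF st'(1) st'(3)]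
    have c1: "n = 1 \<or> a (n-1) \<ge> 2"
    proof (cases "n = 1")
      case False
      then have "n - 1 \<ge> 1" using n by simp
      then have "a (n-1) \<ge> 1" by (rule a_pos)
      then show ?thesis using st'(2) by simp
    qed simp
    have vF: "valid (wF n)" using val_wF[OF n st'(1)] c1 by blast
    show ?thesis
    proof (cases "runlen n = 1")
      case True
      then show ?thesis using F3 F2 st vF n by (simp add: wblk_def Hd_def Lw_def rend_def)
    next
      case False
      define r where "r = runlen n"
      have r2: "r \<ge> 2" using False rl(1) r_def by simp
      define e where "e = n + r - 1"
      have wb: "wblk n = [wF n] @ map (\<lambda>k. wD (n+k)) [0..<r] @ [wF e]"
        using F3 F2 st n False by (simp add: wblk_def r_def e_def)
      have ae: "a e = 1" "a (e - 1) = 1" "a (Suc e) \<ge> 2"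
      proof -
        show "a e = 1" using rl(3)[of "r-1"] r2 by (simp add: e_def r_def)
        show "a (e - 1) = 1" using rl(3)[of "r-2"] r2 n by (simp add: e_def r_def numeral_2_eq_2)
        have "Suc e = n + r" using r2 by (simp add: e_def)
        then have "a (Suc e) \<noteq> 1" using rl(2) r_def by simp
        then show "a (Suc e) \<ge> 2" using a_pos[of "Suc e"] by simp
      qed
      have e2: "e \<ge> 2" using r2 n by (simp add: e_def)
      have an1: "a (Suc n) = 1" using rl(3)[of 1] r2 r_def by simp
      have ch1: "chain (wF n) (wD n)" by (rule C7[OF n st'(1) an1 c1])
      have ch2: "chain (wD e) (wF e)" by (rule C9[OF e2 ae])
      have ch3: "successively chain (map (\<lambda>k. wD (n+k)) [0..<r])"
      proof (rule succ_map)
        fix k assume k: "Suc k < r"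
        have "a (n + k) = 1" "a (Suc (n + k)) = 1" using rl(3)[of k] rl(3)[of "Suc k"] k r_def by auto
        then show "chain (wD (n + k)) (wD (n + Suc k))" using C8[of "n+k"] n by simp
      qed
      have lastm: "last (map (\<lambda>k. wD (n+k)) [0..<r]) = wD e" using r2 by (simp add: last_map e_def)
      have hdm: "hd (map (\<lambda>k. wD (n+k)) [0..<r]) = wD n" using r2 by (simp add: hd_map)
      define M where "M = map (\<lambda>k. wD (n+k)) [0..<r]"
      have Mne: "M \<noteq> []" using r2 by (simp add: M_def)
      have s1: "successively chain (M @ [wF e])"
        using ch2 ch3 lastm Mne unfolding M_def[symmetric] by (simp add: successively_append_iff)
      have "hd (M @ [wF e]) = wD n" using hdm Mne unfolding M_def[symmetric] by simp
      then have suc: "successively chain (wblk n)"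
        unfolding wb M_def[symmetric] using s1 ch1 by (simp add: successively_Cons)
      have vals: "\<forall>w\<in>set (wblk n). valid w"
        unfolding wb using vF val_wF[of e] ae e2 val_wD n by auto
      have "rend n = e" by (simp add: rend_def e_def r_def)
      then show ?thesis using suc vals wb F3 F2 st'(1) by (simp add: Hd_def Lw_def)
    qed
  qed
qed

lemma boundary:
  assumes N: "N \<ge> 1" and ne: "wblk (Suc N) \<noteq> []"
  shows "chain (Lw N) (Hd (Suc N))"
proof (cases "2 \<le> a N")
  case True
  show ?thesis
  proof (cases "3 \<le> a (Suc N)")
    case True then show ?thesis using C3[OF N] \<open>2 \<le> a N\<close> by (simp add: Lw_def Hd_def)
  next
    case F3: False
    show ?thesis
    proof (cases "a (Suc N) = 2")
      case True then show ?thesis using C4[OF N] \<open>2 \<le> a N\<close> by (simp add: Lw_def Hd_def)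
    next
      case False
      then have "a (Suc N) = 1" using F3 a_pos[of "Suc N"] by simp
      then show ?thesis using C5[OF N \<open>2 \<le> a N\<close>] \<open>2 \<le> a N\<close> by (simp add: Lw_def Hd_def)
    qed
  qed
next
  case False
  then have aN: "a N = 1" using a_pos[OF N] by simp
  then have "\<not> isstart (Suc N)" by (simp add: isstart_def)
  then have a2: "a (Suc N) \<ge> 2" using wblk_ne[of "Suc N"] ne by simp
  have "\<exists>j>N. a j \<noteq> 1" using a2 by (intro exI[of _ "Suc N"]) simp
  note rl = rl_facts[OF aN this]
  have "runlen N = 1"
  proof (rule ccontr)
    assume "runlen N \<noteq> 1"
    then have "1 < runlen N" using rl(1) by simp
    then have "a (N + 1) = 1" by (rule rl(3))
    then show False using a2 by simp
  qed
  then have rN: "rend N = N" by (simp add: rend_def)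
  show ?thesis
  proof (cases "3 \<le> a (Suc N)")
    case True then show ?thesis using C6a[OF N aN a2] aN rN by (simp add: Lw_def Hd_def)
  next
    case False
    then have "a (Suc N) = 2" using a2 by simp
    then show ?thesis using C6b[OF N aN] aN rN by (simp add: Lw_def Hd_def)
  qed
qed

end

context cfa begin

lemma wpre_0: "wpre 0 = []" by (simp add: wpre_def)
lemma wpre_Suc: "wpre (Suc N) = wpre N @ wblk (Suc N)" by (simp add: wpre_def)

lemma wpre_prefix: "N \<le> N' \<Longrightarrow> \<exists>ys. wpre N' = wpre N @ ys"
proof (induction N' rule: dec_induct)
  case base then show ?case by simp
next
  case (step n) then show ?case by (auto simp: wpre_Suc)
qed

lemma rend_suc:
  assumes A: "a N = 1" "a (Suc N) = 1" and ex: "\<exists>j>Suc N. a j \<noteq> 1"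
  shows "rend (Suc N) = rend N"
proof -
  obtain j where j: "j > Suc N" "a j \<noteq> 1" using ex by blast
  have P: "a (N + (j - N)) \<noteq> 1" using j by simp
  have "runlen N = Suc (LEAST m. a (N + Suc m) \<noteq> 1)"
    unfolding runlen_def by (rule Least_Suc[of "\<lambda>r. a (N + r) \<noteq> 1" "j - N", OF P]) (use A in simp)
  also have "(LEAST m. a (N + Suc m) \<noteq> 1) = runlen (Suc N)" unfolding runlen_def by simp
  finally show ?thesis by (simp add: rend_def)
qed

definition "hyp N \<longleftrightarrow> 2 \<le> a N \<or> (\<exists>j>N. a j \<noteq> 1)"

lemma inv:
  assumes "N \<ge> 1" "hyp N"
  shows "wpre N \<noteq> [] \<and> last (wpre N) = Lw N \<and> successively chain (wpre N) \<and> (\<forall>w\<in>set (wpre N). valid w)"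
  using assms
proof (induction N)
  case 0 then show ?case by simp
next
  case (Suc N)
  show ?case
  proof (cases "N = 0")
    case True
    have "wblk 1 \<noteq> []"
    proof (cases "2 \<le> a 1")
      case True then show ?thesis using wblk_ne[of 1] by simp
    next
      case False
      then have "a 1 = 1" using a_pos[of 1] by simp
      moreover have "\<exists>j>1. a j \<noteq> 1" using Suc.prems \<open>N = 0\<close> False by (simp add: hyp_def)
      ultimately have "isstart 1" by (simp add: isstart_def a0)
      then show ?thesis using wblk_ne[of 1] by simp
    qed
    then show ?thesis using blk_facts[of 1] True by (simp add: wpre_def)
  next
    case False
    then have N1: "N \<ge> 1" by simp
    have hN: "hyp N"
    proof -
      consider "2 \<le> a (Suc N)" | "\<exists>j>Suc N. a j \<noteq> 1" using Suc.prems(2) unfolding hyp_def by blast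
      then show ?thesis
      proof cases
        case 1 then show ?thesis unfolding hyp_def by (intro disjI2 exI[of _ "Suc N"]) simp
      next
        case 2
        then obtain j where "j > Suc N" "a j \<noteq> 1" by blast
        then show ?thesis unfolding hyp_def by (intro disjI2 exI[of _ j]) simp
      qed
    qed
    note IH = Suc.IH[OF N1 hN]
    show ?thesis
    proof (cases "wblk (Suc N) = []")
      case True
      then have nst: "\<not> 2 \<le> a (Suc N)" "\<not> isstart (Suc N)" using wblk_ne[of "Suc N"] by auto
      then have a1: "a (Suc N) = 1" using a_pos[of "Suc N"] by simp
      have ex: "\<exists>j>Suc N. a j \<noteq> 1" using Suc.prems(2) nst unfolding hyp_def by auto
      have aN: "a N = 1" using nst(2) a1 ex unfolding isstart_def by auto
      have "Lw (Suc N) = Lw N" using rend_suc[OF aN a1 ex] aN a1 by (simp add: Lw_def)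
      then show ?thesis using IH True by (simp add: wpre_Suc)
    next
      case False
      note B = blk_facts[OF _ False]
      have c: "chain (Lw N) (Hd (Suc N))" by (rule boundary[OF N1 False])
      have "successively chain (wpre N @ wblk (Suc N))"
        using IH B c False by (simp add: successively_append_iff)
      then show ?thesis using IH B False by (auto simp: wpre_Suc)
    qed
  qed
qed

lemma hd_wpre: "N \<ge> 1 \<Longrightarrow> wblk 1 \<noteq> [] \<Longrightarrow> hd (wpre N) = Hd 1"
proof -
  assume N: "N \<ge> 1" and ne: "wblk 1 \<noteq> []"
  obtain ys where "wpre N = wpre 1 @ ys" using wpre_prefix[OF N] by blast
  moreover have "wpre 1 = wblk 1" by (simp add: wpre_def)
  ultimately show ?thesis using blk_facts[of 1] ne by simp
qed

lemma snd_Hd1: "snd (Hd 1) = 1"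
  using a_pos[of 1] by (auto simp: Hd_def snd_w numeral_eq_Suc)

lemma Lw_ge: assumes N: "N \<ge> 1" and h: "hyp N" shows "snd (Lw N) \<ge> Q N"
proof (cases "2 \<le> a N")
  case True
  have "int (a N) * Q N \<ge> int 2 * Q N" using ige[OF _ True] qs_nonneg[of "cf_a \<alpha>" N] by simp
  then show ?thesis using True Q_rec[OF N] qs_nonneg[of "cf_a \<alpha>" "N-1"] by (simp add: Lw_def snd_w)
next
  case False
  then have aN: "a N = 1" using a_pos[OF N] by simp
  have ex: "\<exists>j>N. a j \<noteq> 1" using h False unfolding hyp_def by simp
  have "runlen N \<ge> 1" using rl_facts(1)[OF aN ex] .
  then have "rend N \<ge> N" by (simp add: rend_def)
  then have "Q (rend N) \<ge> Q N" by (rule Q_mono)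
  then show ?thesis using False qs_nonneg[of "cf_a \<alpha>" "rend N - 1"] by (simp add: Lw_def snd_w)
qed

definition "C5 \<longleftrightarrow> (\<exists>n\<ge>1. a (n-1) \<noteq> 1 \<and> (\<forall>j\<ge>n. a j = 1))"
definition "n0 = (THE n. n \<ge> 1 \<and> a (n-1) \<noteq> 1 \<and> (\<forall>j\<ge>n. a j = 1))"
definition "Wseq i = (if C5 then (if i < length (wpre (n0 - 1)) then wpre (n0 - 1) ! i
     else winf n0 (i - length (wpre (n0 - 1))))
   else wpre (LEAST N. i < length (wpre N)) ! i)"

lemma n0_props: assumes "C5" shows "n0 \<ge> 1" "a (n0-1) \<noteq> 1" "\<And>j. j \<ge> n0 \<Longrightarrow> a j = 1"
proof -
  let ?P = "\<lambda>n. n \<ge> 1 \<and> a (n-1) \<noteq> 1 \<and> (\<forall>j\<ge>n. a j = 1)"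
  have ex: "\<exists>n. ?P n" using assms unfolding C5_def by blast
  have un: "m = n" if "?P n" "?P m" for n m
  proof (rule ccontr)
    assume "m \<noteq> n"
    then consider "n < m" | "m < n" by linarith
    then show False
    proof cases
      case 1 then have "a (m-1) = 1" using that(1) by auto
      then show False using that(2) by simp
    next
      case 2 then have "a (n-1) = 1" using that(2) by auto
      then show False using that(1) by simp
    qed
  qed
  have ex1: "\<exists>!n. ?P n" using ex un by blast
  have "?P n0" unfolding n0_def by (rule theI'[OF ex1])
  then show "n0 \<ge> 1" "a (n0-1) \<noteq> 1" "\<And>j. j \<ge> n0 \<Longrightarrow> a j = 1" by auto
qed

lemma nonC5: assumes "\<not> C5" shows "\<exists>j>N. a j \<noteq> 1"
proof (rule ccontr)
  assume "\<not> (\<exists>j>N. a j \<noteq> 1)"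
  then have all: "\<forall>j\<ge>Suc N. a j = 1" by auto
  let ?P = "\<lambda>n. n \<ge> 1 \<and> (\<forall>j\<ge>n. a j = 1)"
  define n where "n = (LEAST n. ?P n)"
  have Pn: "?P n" unfolding n_def by (rule LeastI[of ?P "Suc N"]) (use all in simp)
  have "a (n-1) \<noteq> 1"
  proof (cases "n = 1")
    case True then show ?thesis by (simp add: a0)
  next
    case False
    show ?thesis
    proof
      assume h: "a (n-1) = 1"
      have "?P (n-1)"
      proof (intro conjI allI impI)
        have "n \<ge> 1" using Pn by simp
        then show "n - 1 \<ge> 1" using False by simp
      next
        fix j assume "j \<ge> n - 1"
        then consider "j = n - 1" | "j \<ge> n" by linarith
        then show "a j = 1" using h Pn by cases auto
      qed
      then have "n \<le> n - 1" unfolding n_def by (rule Least_le)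
      moreover have "n \<ge> 1" using Pn by simp
      ultimately show False by simp
    qed
  qed
  then have "C5" unfolding C5_def using Pn by blast
  then show False using assms by simp
qed

lemma hyp_nonC5: "\<not> C5 \<Longrightarrow> hyp N" unfolding hyp_def using nonC5 by blast

lemma wpre_len_mono: "N \<le> N' \<Longrightarrow> length (wpre N) \<le> length (wpre N')"
proof -
  assume "N \<le> N'"
  then obtain ys where "wpre N' = wpre N @ ys" using wpre_prefix by blast
  then show ?thesis by simp
qed

lemma len_unb: assumes "\<not> C5" shows "\<exists>N. i < length (wpre N)"
proof (induction i)
  case 0
  have "wpre 1 \<noteq> []" using inv[of 1] hyp_nonC5[OF assms] by simp
  then show ?case by (intro exI[of _ 1]) simp
next
  case (Suc i)
  then obtain N where N: "i < length (wpre N)" by blast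
  obtain j where j: "j > N" "a j \<noteq> 1" using nonC5[OF assms] by blast
  have "2 \<le> a j" using j a_pos[of j] by simp
  then have ne: "wblk j \<noteq> []" using wblk_ne[of j] j by simp
  have "length (wpre N) \<le> length (wpre (j - 1))" using j by (intro wpre_len_mono) simp
  moreover have "length (wpre j) = length (wpre (j-1)) + length (wblk j)" using wpre_Suc[of "j-1"] j by simp
  moreover have "length (wblk j) > 0" using ne by simp
  ultimately have "length (wpre j) > length (wpre N)" by linarith
  then show ?case using N by (intro exI[of _ j]) simp
qed

lemma Wseq_nonC5: assumes "\<not> C5" "i < length (wpre N)" shows "Wseq i = wpre N ! i"
proof -
  define N0 where "N0 = (LEAST N. i < length (wpre N))"
  have i0: "i < length (wpre N0)" unfolding N0_def by (rule LeastI[of _ N]) (rule assms(2))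
  have "N0 \<le> N" unfolding N0_def by (rule Least_le) (rule assms(2))
  then obtain ys where "wpre N = wpre N0 @ ys" using wpre_prefix by blast
  then show ?thesis using assms(1) i0 by (simp add: Wseq_def N0_def[symmetric] nth_append)
qed

lemma props_nonC5:
  assumes nC: "\<not> C5"
  shows "valid (Wseq i)" "chain (Wseq i) (Wseq (Suc i))" "snd (Wseq 0) = 1" "\<exists>i. snd (Wseq i) \<ge> K"
proof -
  obtain N where N: "Suc i < length (wpre N)" using len_unb[OF nC] by blast
  have N1: "N \<ge> 1" using N by (cases N) (auto simp: wpre_0)
  note I = inv[OF N1 hyp_nonC5[OF nC]]
  have w1: "Wseq i = wpre N ! i" "Wseq (Suc i) = wpre N ! Suc i"
    using Wseq_nonC5[OF nC] N by auto
  show "valid (Wseq i)" using I w1 N by simp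
  show "chain (Wseq i) (Wseq (Suc i))" using I w1 N successively_nth[of chain "wpre N" i] by simp
  have ne1: "wpre 1 \<noteq> []" using inv[of 1] hyp_nonC5[OF nC] by simp
  have "wblk 1 \<noteq> []" using ne1 by (simp add: wpre_def)
  then have "hd (wpre 1) = Hd 1" by (intro hd_wpre) simp
  moreover have "Wseq 0 = wpre 1 ! 0" using Wseq_nonC5[OF nC, of 0 1] ne1 by simp
  ultimately show "snd (Wseq 0) = 1" using ne1 snd_Hd1 by (simp add: hd_conv_nth)
  define M where "M = nat K + 2"
  have M1: "M \<ge> 1" by (simp add: M_def)
  note IM = inv[OF M1 hyp_nonC5[OF nC]]
  have "Wseq (length (wpre M) - 1) = wpre M ! (length (wpre M) - 1)"
    using IM by (intro Wseq_nonC5[OF nC]) simp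
  also have "\<dots> = Lw M" using IM last_conv_nth[of "wpre M"] by simp
  finally have "snd (Wseq (length (wpre M) - 1)) \<ge> Q M" using Lw_ge[OF M1 hyp_nonC5[OF nC]] by simp
  moreover have "Q M \<ge> int M - 1" by (rule Q_ge)
  moreover have "int M - 1 \<ge> K" by (simp add: M_def)
  ultimately have "snd (Wseq (length (wpre M) - 1)) \<ge> K" by linarith
  then show "\<exists>i. snd (Wseq i) \<ge> K" by blast
qed

lemma winf_props:
  assumes c: "C5"
  shows "valid (winf n0 k)" "chain (winf n0 k) (winf n0 (Suc k))"
proof -
  note P = n0_props[OF c]
  have a0': "a n0 = 1" "a (Suc n0) = 1" using P(3) by auto
  have c1: "n0 = 1 \<or> a (n0-1) \<ge> 2"
  proof (cases "n0 = 1")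
    case False
    then have "n0 - 1 \<ge> 1" using P(1) by simp
    then have "a (n0-1) \<ge> 1" by (rule a_pos)
    then show ?thesis using P(2) by simp
  qed simp
  show "valid (winf n0 k)"
  proof (cases "k = 0")
    case True
    have "valid (wF n0)" using val_wF[OF P(1) a0'(1)] c1 by blast
    then show ?thesis using True by (simp add: winf_def)
  next
    case False then show ?thesis using val_wD[of "n0 + k - 1"] P(1) by (simp add: winf_def)
  qed
  show "chain (winf n0 k) (winf n0 (Suc k))"
  proof (cases "k = 0")
    case True then show ?thesis using C7[OF P(1) a0' c1] by (simp add: winf_def)
  next
    case False
    have j: "n0 + k - 1 \<ge> 1" using P(1) False by simp
    have "a (n0 + k - 1) = 1" "a (Suc (n0 + k - 1)) = 1" using P(3) False by auto
    then have "chain (wD (n0 + k - 1)) (wD (Suc (n0 + k - 1)))" using C8[OF j] by simp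
    moreover have "Suc (n0 + k - 1) = n0 + Suc k - 1" using P(1) by simp
    ultimately show ?thesis using False by (simp add: winf_def)
  qed
qed

lemma props_C5:
  assumes c: "C5"
  shows "valid (Wseq i)" "chain (Wseq i) (Wseq (Suc i))" "snd (Wseq 0) = 1" "\<exists>i. snd (Wseq i) \<ge> K"
proof -
  note P = n0_props[OF c]
  define L where "L = wpre (n0 - 1)"
  have W: "Wseq j = (if j < length L then L ! j else winf n0 (j - length L))" for j
    using c by (simp add: Wseq_def L_def)
  have Lfacts: "L \<noteq> [] \<and> last L = wH (n0 - 1) \<and> successively chain L \<and> (\<forall>w\<in>set L. valid w)
     \<and> a (n0 - 1) \<ge> 2 \<and> n0 - 1 \<ge> 1" if "L \<noteq> []"
  proof -
    have n2: "n0 \<noteq> 1" using that by (auto simp: L_def wpre_0)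
    then have N1: "n0 - 1 \<ge> 1" using P(1) by simp
    have aN: "a (n0 - 1) \<ge> 2" using a_pos[OF N1] P(2) by simp
    have "hyp (n0 - 1)" using aN by (simp add: hyp_def)
    note I = inv[OF N1 this]
    show ?thesis using I aN N1 by (simp add: L_def Lw_def)
  qed
  show "valid (Wseq i)"
  proof (cases "i < length L")
    case True
    then have "L \<noteq> []" by auto
    then show ?thesis using Lfacts True W[of i] by simp
  next
    case False then show ?thesis using W[of i] winf_props(1)[OF c] by simp
  qed
  show "chain (Wseq i) (Wseq (Suc i))"
  proof (cases "Suc i < length L")
    case True
    then have "L \<noteq> []" by auto
    then have "successively chain L" using Lfacts by blast
    then show ?thesis using True W[of i] W[of "Suc i"] successively_nth[of chain L i] by simp
  next
    case F1: False
    show ?thesis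
    proof (cases "i < length L")
      case True
      then have iL: "Suc i = length L" using F1 by simp
      then have iL': "i = length L - 1" by simp
      have "L \<noteq> []" using True by auto
      note LF = Lfacts[OF this]
      have "Wseq i = L ! (length L - 1)" using W[of i] True iL' by simp
      then have "Wseq i = wH (n0 - 1)" using LF last_conv_nth[of L] by simp
      moreover have "Wseq (Suc i) = wF n0" using W[of "Suc i"] iL by (simp add: winf_def)
      moreover have "chain (wH (n0 - 1)) (wF (Suc (n0 - 1)))"
        using C5[of "n0 - 1"] LF P(1,3) by simp
      ultimately show ?thesis using P(1) by simp
    next
      case False
      then have "Suc i - length L = Suc (i - length L)" by simp
      then show ?thesis using W[of i] W[of "Suc i"] False F1 winf_props(2)[OF c] by simp
    qed
  qed
  show "snd (Wseq 0) = 1"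
  proof (cases "L = []")
    case True
    then have "Wseq 0 = wF n0" using W[of 0] by (simp add: winf_def)
    moreover have "n0 = 1"
    proof (rule ccontr)
      assume "n0 \<noteq> 1"
      then have N1: "n0 - 1 \<ge> 1" using P(1) by simp
      have aN: "a (n0 - 1) \<ge> 2" using a_pos[OF N1] P(2) by simp
      have "hyp (n0 - 1)" using aN by (simp add: hyp_def)
      then show False using inv[OF N1] True by (simp add: L_def)
    qed
    ultimately show ?thesis by (simp add: snd_w)
  next
    case False
    note LF = Lfacts[OF False]
    have "hyp 1"
    proof (cases "n0 - 1 = 1")
      case True then show ?thesis using LF by (simp add: hyp_def)
    next
      case F: False
      have "a (n0 - 1) \<noteq> 1" using LF by simp
      moreover have "n0 - 1 > 1" using LF F by simp
      ultimately show ?thesis unfolding hyp_def by blast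
    qed
    then have "wpre 1 \<noteq> []" using inv[of 1] by simp
    then have "wblk 1 \<noteq> []" by (simp add: wpre_def)
    then have "hd L = Hd 1" unfolding L_def using LF by (intro hd_wpre) auto
    then have "Wseq 0 = Hd 1" using W[of 0] False hd_conv_nth[of L] by simp
    then show ?thesis using snd_Hd1 by simp
  qed
  define k where "k = nat K + 2"
  have "Wseq (length L + k) = wD (n0 + k - 1)" using W[of "length L + k"] by (simp add: winf_def k_def)
  then have "snd (Wseq (length L + k)) = 2 * Q (n0 + k - 1)" by (simp add: snd_w)
  moreover have "Q (n0 + k - 1) \<ge> int (n0 + k - 1) - 1" by (rule Q_ge)
  moreover have "int (n0 + k - 1) - 1 \<ge> K" using P(1) by (simp add: k_def)
  moreover have "Q (n0 + k - 1) \<ge> 0" by (rule qs_nonneg)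
  ultimately have "snd (Wseq (length L + k)) \<ge> K" by linarith
  then show "\<exists>i. snd (Wseq i) \<ge> K" by blast
qed

lemma props:
  "valid (Wseq i)" "chain (Wseq i) (Wseq (Suc i))" "snd (Wseq 0) = 1" "\<exists>i. snd (Wseq i) \<ge> K"
  using props_C5 props_nonC5 by (cases C5; blast)+

lemma bp: "blk_prefix \<alpha> N = map snd (wpre N)"
proof -
  have e: "blk \<alpha> = (\<lambda>n. map snd (wblk n))" using blk_eq by auto
  show ?thesis by (simp add: blk_prefix_def wpre_def map_concat e comp_def)
qed

lemma ib: "n \<ge> 1 \<Longrightarrow> inf_blk \<alpha> n k = snd (winf n k)"
  by (cases "k = 0") (auto simp: inf_blk_def winf_def snd_w cq1 cq2 cq6)

lemma blockseq_eq: "blockseq \<alpha> i = snd (Wseq i)"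
proof (cases C5)
  case True
  note P = n0_props[OF True]
  have "blockseq \<alpha> i = (if i < length (blk_prefix \<alpha> (n0 - 1)) then blk_prefix \<alpha> (n0 - 1) ! i
      else inf_blk \<alpha> n0 (i - length (blk_prefix \<alpha> (n0 - 1))))"
    using True unfolding blockseq_def Let_def C5_def[symmetric] n0_def[symmetric] by simp
  then show ?thesis using True by (simp add: Wseq_def bp ib[OF P(1)])
next
  case False
  have "blockseq \<alpha> i = blk_prefix \<alpha> (LEAST N. i < length (blk_prefix \<alpha> N)) ! i"
    using False unfolding blockseq_def Let_def C5_def[symmetric] by simp
  moreover obtain N where "i < length (wpre N)" using len_unb[OF False] by blast
  then have "i < length (wpre (LEAST N. i < length (wpre N)))" by (rule LeastI)
  ultimately show ?thesis using False by (simp add: Wseq_def bp)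
qed

end

theorem mainTheorem1:
  fixes \<alpha> :: real
  assumes "0 < \<alpha>" and "\<alpha> < 1" and "\<alpha> \<notin> \<rat>"
  shows "infinite (first_occ (blockseq \<alpha>)) \<and> infinite (frakQ \<alpha>) \<and>
         (\<forall>k. blockseq \<alpha> (enumerate (first_occ (blockseq \<alpha>)) k) = int (enumerate (frakQ \<alpha>) k))"
proof -
  interpret cfa \<alpha> using assms by unfold_locales
  have bs: "blockseq \<alpha> = snd \<circ> Wseq" using blockseq_eq by auto
  have unb: "\<And>K. \<exists>i. snd (Wseq i) \<ge> K" by (rule props(4))
  have fq: "frakQ \<alpha> = {t. int t \<in> range (snd \<circ> Wseq)}"
    by (rule rec_thm[OF props(1) props(2) props(3) unb])
  have mono: "mono (blockseq \<alpha>)"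
    unfolding bs by (rule mono_iff_le_Suc[THEN iffD2]) (use props(2) in \<open>auto simp: chain_def\<close>)
  have pos: "\<And>i. blockseq \<alpha> i \<ge> 1" using props(1) by (simp add: bs valid_def)
  show ?thesis
    by (rule final_enum[OF mono]) (use unb pos fq bs in auto)
qed

end
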